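(* (Optimality of the Schatten exponent.) Let $n,p,q\ge1$ satisfy $\frac{2}{p}+\frac{n}{q}=n$. Then for every $r>\frac{2q}{q+1}$, $$\sup_{0\ne\gamma_0\in\mathcal{G}^r}\frac{\big\|\rho_{e^{-itH}\gamma_0e^{itH}}\big\|_{L^p_tL^q_x(\mathbb{T}\times\mathbb{R}^n)}}{\|\gamma_0\|_{\mathcal{G}^r}}=+\infty,$$ where the supremum is over nonzero self-adjoint operators $\gamma_0\in\mathcal{G}^r(L^2(\mathbb{R}^n))$.
   Context: $H=-\Delta+|x|^2$ on $\mathbb{R}^n$ and $e^{-itH}$ the associated unitary group; $\mathbb{T}=[-\pi,\pi]$. $\mathcal{G}^r$ is the Schatten $r$-class on $L^2(\mathbb{R}^n)$. For a self-adjoint operator written as $\gamma_0=\sum_j n_j|u_j\rangle\langle u_j|$ with $(u_j)$ orthonormal in $L^2(\mathbb{R}^n)$ and $n_j\in\mathbb{R}$ (where $|u\rangle\langle v|$ denotes $f\mapsto\langle v,f\rangle u$), one has $\|\gamma_0\|_{\mathcal{G}^r}=(\sum_j|n_j|^r)^{1/r}$, and for $\gamma(t)=e^{-itH}\gamma_0e^{itH}=\sum_j n_j|e^{-itH}u_j\rangle\langle e^{-itH}u_j|$ the density is $\rho_{\gamma(t)}(x)=\sum_j n_j|e^{-itH}u_j(x)|^2$. *)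

theory Defs
  imports "HOL-Analysis.Analysis"
begin

text \<open>Real power of an extended nonnegative real, for positive exponents (infinity stays infinity).\<close>
definition enn_powr :: "ennreal \<Rightarrow> real \<Rightarrow> ennreal" where
  "enn_powr a s = (if a = \<infinity> then \<infinity> else ennreal (enn2real a powr s))"

fun hermite_poly :: "nat \<Rightarrow> real \<Rightarrow> real" where
  "hermite_poly 0 x = 1"
| "hermite_poly (Suc 0) x = 2 * x"
| "hermite_poly (Suc (Suc k)) x =
     2 * x * hermite_poly (Suc k) x - 2 * real (Suc k) * hermite_poly k x"

text \<open>L2-normalised one-dimensional Hermite functions.\<close>
definition hermite_fun :: "nat \<Rightarrow> real \<Rightarrow> real" where
  "hermite_fun k x = hermite_poly k x * exp (- (x^2) / 2) / sqrt (2^k * fact k * sqrt pi)"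

text \<open>Hermite functions on R^n (tensor products), eigenfunctions of H = -Delta + |x|^2.\<close>
definition hermite_nd :: "('n::finite \<Rightarrow> nat) \<Rightarrow> real^'n \<Rightarrow> complex" where
  "hermite_nd \<alpha> x = complex_of_real (\<Prod>i\<in>UNIV. hermite_fun (\<alpha> i) (x $ i))"

definition hermite_eig :: "('n::finite \<Rightarrow> nat) \<Rightarrow> real" where
  "hermite_eig \<alpha> = 2 * real (\<Sum>i\<in>UNIV. \<alpha> i) + real CARD('n)"

definition sq_integrable :: "(real^'n::finite \<Rightarrow> complex) \<Rightarrow> bool" where
  "sq_integrable f \<longleftrightarrow> f \<in> borel_measurable lborel \<and> integrable lborel (\<lambda>x. (cmod (f x))^2)"

definition L2_inner :: "(real^'n::finite \<Rightarrow> complex) \<Rightarrow> (real^'n \<Rightarrow> complex) \<Rightarrow> complex" where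
  "L2_inner f g = (\<integral>x. cnj (f x) * g x \<partial>lborel)"

definition L2_orthonormal :: "(nat \<Rightarrow> real^'n::finite \<Rightarrow> complex) \<Rightarrow> bool" where
  "L2_orthonormal u \<longleftrightarrow> (\<forall>j. sq_integrable (u j)) \<and>
     (\<forall>i j. L2_inner (u i) (u j) = (if i = j then 1 else 0))"

text \<open>The unitary group e^{-itH}, defined spectrally through the Hermite basis
  (a representative of the L2 class).\<close>
definition herm_prop :: "real \<Rightarrow> (real^'n::finite \<Rightarrow> complex) \<Rightarrow> (real^'n \<Rightarrow> complex)" where
  "herm_prop t f = (SOME g. sq_integrable g \<and>
     (\<forall>\<alpha>. L2_inner (hermite_nd \<alpha>) g =
            exp (- \<i> * complex_of_real (t * hermite_eig \<alpha>)) * L2_inner (hermite_nd \<alpha>) f))"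

text \<open>Density of gamma(t) = e^{-itH} gamma_0 e^{itH}, gamma_0 = sum_j c_j |u_j><u_j|.\<close>
definition density_t :: "(nat \<Rightarrow> real) \<Rightarrow> (nat \<Rightarrow> real^'n::finite \<Rightarrow> complex) \<Rightarrow> real \<Rightarrow> real^'n \<Rightarrow> real" where
  "density_t c u t x = (\<Sum>j. c j * (cmod (herm_prop t (u j) x))^2)"

text \<open>Schatten r-norm of sum_j c_j |u_j><u_j| with (u_j) orthonormal.\<close>
definition schatten_norm :: "real \<Rightarrow> (nat \<Rightarrow> real) \<Rightarrow> real" where
  "schatten_norm r c = (\<Sum>j. \<bar>c j\<bar> powr r) powr (1 / r)"

definition mixed_norm :: "real \<Rightarrow> real \<Rightarrow> (real \<Rightarrow> real^'n::finite \<Rightarrow> real) \<Rightarrow> ennreal" where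
  "mixed_norm p q F = enn_powr
     (\<integral>\<^sup>+ t. indicator {-pi..pi} t *
        enn_powr (\<integral>\<^sup>+ x. ennreal (\<bar>F t x\<bar> powr q) \<partial>lborel) (p / q) \<partial>lborel) (1 / p)"

end

theory Submission
  imports Defs "HOL-Probability.Distributions" "HOL-Computational_Algebra.Polynomial"
begin

lemma Basis_vec_range: "(Basis :: (real^'n::finite) set) = range (\<lambda>i. axis i 1)"
  by (auto simp: Basis_vec_def)

lemma inj_axis1: "inj (\<lambda>i::'n::finite. axis i (1::real))"
  by (auto intro!: injI simp: axis_eq_axis)

lemma prod_vec_Basis:
  fixes f :: "'n::finite \<Rightarrow> real \<Rightarrow> 'c::comm_monoid_mult"
  shows "(\<Prod>b\<in>(Basis::(real^'n) set). f (SOME i. axis i 1 = b) (x \<bullet> b)) = (\<Prod>i\<in>UNIV. f i (x $ i))"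
proof -
  have "(\<Prod>b\<in>(Basis::(real^'n) set). f (SOME i. axis i 1 = b) (x \<bullet> b))
     = (\<Prod>i\<in>UNIV. f (SOME j. axis j 1 = (axis i 1::real^'n)) (x \<bullet> axis i 1))"
    unfolding Basis_vec_range by (subst prod.reindex[OF inj_axis1]) (simp add: o_def)
  also have "\<dots> = (\<Prod>i\<in>UNIV. f i (x $ i))"
    by (intro prod.cong refl) (simp add: axis_eq_axis cart_eq_inner_axis)
  finally show ?thesis .
qed

lemma lborel_vec_prod:
  fixes f :: "'n::finite \<Rightarrow> real \<Rightarrow> real"
  assumes int: "\<And>i. integrable lborel (f i)"
  shows "integrable lborel (\<lambda>x::real^'n. \<Prod>i\<in>UNIV. f i (x$i))"
    and "(\<integral>x. (\<Prod>i\<in>UNIV. f i (x$i)) \<partial>(lborel::(real^'n) measure)) = (\<Prod>i\<in>UNIV. \<integral>y. f i y \<partial>lborel)"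
proof -
  interpret P: product_sigma_finite "\<lambda>_::real^'n. lborel :: real measure"
    by standard
  define F where "F b = f (SOME i. axis i 1 = b)" for b :: "real^'n"
  have meas[measurable]: "f i \<in> borel_measurable borel" for i
    using int[of i] by (simp add: borel_measurable_integrable)
  have measF[measurable]: "F b \<in> borel_measurable borel" for b
    unfolding F_def by simp
  have eq: "(\<lambda>x::real^'n. \<Prod>i\<in>UNIV. f i (x$i)) = (\<lambda>x. \<Prod>b\<in>Basis. F b (x \<bullet> b))"
    unfolding F_def by (simp add: prod_vec_Basis)
  have gm[measurable]: "(\<lambda>x::real^'n. \<Prod>b\<in>Basis. F b (x \<bullet> b)) \<in> borel_measurable borel"
    by measurable
  have comp: "(\<Prod>b\<in>Basis. F b ((\<Sum>c\<in>Basis. y c *\<^sub>R c) \<bullet> b)) = (\<Prod>b\<in>Basis. F b (y b))" for y :: "real^'n \<Rightarrow> real"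
    by (intro prod.cong refl) (simp add: inner_sum_left_Basis)
  have mm: "(\<lambda>y. \<Sum>c\<in>Basis. y c *\<^sub>R c) \<in> measurable (\<Pi>\<^sub>M b\<in>(Basis::(real^'n) set). lborel) borel"
    by measurable
  have intF: "integrable lborel (F b)" for b unfolding F_def by (rule int)
  have i1: "integrable (\<Pi>\<^sub>M b\<in>(Basis::(real^'n) set). lborel) (\<lambda>y. \<Prod>b\<in>Basis. F b (y b))"
    by (rule P.product_integrable_prod) (auto intro: intF)
  show "integrable lborel (\<lambda>x::real^'n. \<Prod>i\<in>UNIV. f i (x$i))"
    unfolding eq
    apply (subst lborel_eq)
    apply (subst integrable_distr_eq[OF mm gm])
    using i1 by (simp add: comp)
  have "(\<integral>x. (\<Prod>b\<in>Basis. F b (x \<bullet> b)) \<partial>(lborel::(real^'n) measure))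
      = (\<integral>y. (\<Prod>b\<in>Basis. F b (y b)) \<partial>(\<Pi>\<^sub>M b\<in>(Basis::(real^'n) set). lborel))"
    apply (subst lborel_eq)
    apply (subst integral_distr[OF mm gm])
    by (simp add: comp)
  also have "\<dots> = (\<Prod>b\<in>Basis. \<integral>y. F b y \<partial>lborel)"
    by (rule P.product_integral_prod) (auto intro: intF)
  also have "\<dots> = (\<Prod>i\<in>UNIV. \<integral>y. f i y \<partial>lborel)"
    using prod_vec_Basis[of "\<lambda>i _. \<integral>y. f i y \<partial>lborel" 0] unfolding F_def by simp
  finally show "(\<integral>x. (\<Prod>i\<in>UNIV. f i (x$i)) \<partial>(lborel::(real^'n) measure)) = (\<Prod>i\<in>UNIV. \<integral>y. f i y \<partial>lborel)"
    unfolding eq .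
qed

fun HP :: "nat \<Rightarrow> real poly" where
  "HP 0 = 1"
| "HP (Suc 0) = [:0, 2:]"
| "HP (Suc (Suc k)) = [:0, 2:] * HP (Suc k) - smult (2 * real (Suc k)) (HP k)"

lemma poly_HP: "poly (HP k) x = hermite_poly k x"
  by (induction k rule: HP.induct) (auto simp: algebra_simps)

lemma HP_Suc: "HP (Suc k) = [:0, 2:] * HP k - smult (2 * real k) (HP (k - 1))"
  by (cases k) auto

lemma pderiv_HP: "pderiv (HP k) = smult (2 * real k) (HP (k - 1))"
proof (induction k rule: HP.induct)
  case 1 then show ?case by simp
next
  case 2 then show ?case by (simp add: pderiv_pCons)
next
  case (3 k)
  have "pderiv (HP (Suc (Suc k))) = smult 2 (HP (Suc k)) + [:0, 2:] * smult (2 * real (Suc k)) (HP k)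
      - smult (2 * real (Suc k)) (smult (2 * real k) (HP (k - 1)))"
    using 3 by (simp add: pderiv_mult pderiv_diff pderiv_smult pderiv_pCons)
  also have "\<dots> = smult 2 (HP (Suc k)) + smult (2 * real (Suc k)) ([:0, 2:] * HP k - smult (2 * real k) (HP (k - 1)))"
    by (simp add: algebra_simps smult_diff_right)
  also have "\<dots> = smult (2 * real (Suc (Suc k))) (HP (Suc k))"
    by (simp only: HP_Suc[of k, symmetric]) (simp add: algebra_simps smult_add_left[symmetric])
  finally show ?case by simp
qed

lemma HP_Suc': "HP (Suc k) = [:0, 2:] * HP k - pderiv (HP k)"
  by (simp add: HP_Suc pderiv_HP)

lemma coeff_HP: "coeff (HP k) k = 2 ^ k \<and> (\<forall>i>k. coeff (HP k) i = 0)"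
proof (induction k rule: HP.induct)
  case 1 then show ?case by simp
next
  case 2 then show ?case by (auto simp: coeff_pCons split: nat.splits)
next
  case (3 k)
  have e: "[:0, 2:] * p = pCons 0 (smult 2 p)" for p :: "real poly"
    by (simp add: mult_pCons_left)
  show ?case using 3 by (auto simp: e coeff_pCons split: nat.splits)
qed

lemma degree_HP: "degree (HP k) = k"
  using coeff_HP[of k] by (intro le_antisym degree_le) (auto intro!: le_degree)

definition mom :: "nat \<Rightarrow> real" where
  "mom i = (if even i then sqrt pi * fact i / (2 ^ i * fact (i div 2)) else 0)"

lemma mom_int: "has_bochner_integral lborel (\<lambda>x::real. x ^ i * exp (- x\<^sup>2)) (mom i)"
proof (cases "even i")
  case True
  then obtain k where k: "i = 2 * k" by blast
  have "has_bochner_integral lborel (\<lambda>x::real. exp (-x\<^sup>2)*x^(2 * k))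
      (2 *\<^sub>R ((sqrt pi / 2) * (fact (2 * k) / (2 ^ (2 * k) * fact k))))"
    by (rule has_bochner_integral_even_function[OF gaussian_moment_even_pos]) simp
  then show ?thesis using k by (simp add: mom_def mult.commute)
next
  case False
  then obtain k where k: "i = 2 * k + 1" using oddE by blast
  have "has_bochner_integral lborel (\<lambda>x::real. exp (-x\<^sup>2)*x^(2 * k + 1)) 0"
    by (rule has_bochner_integral_odd_function[OF gaussian_moment_odd_pos]) simp
  then show ?thesis using k by (simp add: mom_def mult.commute)
qed

lemma mom_aux: "K > 0 \<Longrightarrow> D > 0 \<Longrightarrow> G > 0 \<Longrightarrow> (2*K*B*F)/(4*D*(K*G)) = F/(D*G)*B/(2::real)"
  by (simp add: field_simps)

lemma mom_fact: "(fact (2 * k + 2) :: real) / (2 ^ (2*k+2) * fact (k+1)) = (fact (2*k) / (2^(2*k) * fact k)) * real (2*k+1) / 2"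
proof -
  have f1: "(fact (2 * k + 2) :: real) = (2 * real (k+1) * real (2*k+1)) * fact (2 * k)"
    by (simp add: fact_Suc algebra_simps)
  have f2: "(fact (k + 1) :: real) = real (k + 1) * fact k" by simp
  have f3: "(2::real) ^ (2*k+2) = 4 * 2^(2*k)" by simp
  show ?thesis unfolding f1 f2 f3 by (rule mom_aux) auto
qed

lemma mom_rec: "real i * mom (i - 1) = 2 * mom (i + 1)"
proof (cases "even i")
  case True
  then show ?thesis by (cases i) (auto simp: mom_def)
next
  case False
  then obtain k where k: "i = 2 * k + 1" using oddE by blast
  have A: "mom (i - 1) = sqrt pi * (fact (2*k) / (2 ^ (2*k) * fact k))"
    using k by (simp add: mom_def)
  have "mom (i + 1) = sqrt pi * (fact (2*k+2) / (2 ^ (2*k+2) * fact (k+1)))"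
    using k by (simp add: mom_def)
  also have "\<dots> = sqrt pi * ((fact (2*k) / (2^(2*k) * fact k)) * real (2*k+1) / 2)"
    by (simp only: mom_fact)
  finally show ?thesis using A k by simp
qed

definition GL :: "real poly \<Rightarrow> real" where
  "GL P = (\<integral>x. poly P x * exp (- x\<^sup>2) \<partial>lborel)"

lemma GL_has: "has_bochner_integral lborel (\<lambda>x. poly P x * exp (- x\<^sup>2)) (\<Sum>i\<le>degree P. coeff P i * mom i)"
proof -
  have "has_bochner_integral lborel (\<lambda>x. \<Sum>i\<le>degree P. coeff P i * (x ^ i * exp (- x\<^sup>2))) (\<Sum>i\<le>degree P. coeff P i * mom i)"
    by (intro has_bochner_integral_sum has_bochner_integral_mult_right mom_int)
  then show ?thesis by (simp add: poly_altdef sum_distrib_right mult.assoc)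
qed

lemma GL_integrable: "integrable lborel (\<lambda>x. poly (P::real poly) x * exp (- x\<^sup>2))"
  using GL_has[of P] by (rule integrable.intros)

lemma GL_eq: "GL P = (\<Sum>i\<le>degree P. coeff P i * mom i)"
  unfolding GL_def using GL_has by (rule has_bochner_integral_integral_eq)

lemma GL_add: "GL (P + Q) = GL P + GL Q"
  unfolding GL_def by (simp add: distrib_right GL_integrable)

lemma GL_diff: "GL (P - Q) = GL P - GL Q"
  unfolding GL_def by (simp add: left_diff_distrib GL_integrable)

lemma GL_smult: "GL (smult c P) = c * GL P"
  unfolding GL_def by (simp add: mult.assoc)

lemma GL_0: "GL 0 = 0" by (simp add: GL_def)

lemma GL_two: "GL (2 * P) = 2 * GL P"
proof -
  have "GL (2 * P) = GL (P + P)" by (simp only: mult_2)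
  also have "\<dots> = 2 * GL P" by (simp only: GL_add mult_2)
  finally show ?thesis .
qed

lemma GL_sum: "GL (\<Sum>i\<in>A. f i) = (\<Sum>i\<in>A. GL (f i))"
  by (induction A rule: infinite_finite_induct) (simp_all add: GL_add GL_0)

lemma GL_monom: "GL (monom a i) = a * mom i"
proof -
  have "GL (monom a i) = GL (smult a (monom 1 i))" by (simp add: smult_monom)
  also have "\<dots> = a * GL (monom 1 i)" by (rule GL_smult)
  also have "GL (monom 1 i) = mom i"
  proof -
    have "GL (monom 1 i) = (\<Sum>j\<le>i. (if i = j then 1 else 0) * mom j)"
      by (simp add: GL_eq degree_monom_eq coeff_monom)
    also have "\<dots> = (\<Sum>j\<le>i. if i = j then mom j else 0)"
      by (rule sum.cong) auto
    finally show ?thesis by simp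
  qed
  finally show ?thesis .
qed

lemma pderiv_sum': "pderiv (\<Sum>i\<in>A. f i) = (\<Sum>i\<in>A. pderiv (f i))"
  by (induction A rule: infinite_finite_induct) (auto simp: pderiv_add)

lemma GL_pderiv: "GL (pderiv P) = GL ([:0, 2:] * P)"
proof -
  let ?S = "\<Sum>i\<le>degree P. monom (coeff P i) i"
  have m: "GL (pderiv (monom a i)) = GL ([:0, 2:] * monom a i)" for a i
  proof -
    have "[:0, 2:] * monom a i = monom (2 * a) (Suc i)"
      by (simp add: monom_Suc mult_pCons_left smult_monom)
    then have "GL ([:0, 2:] * monom a i) = 2 * a * mom (i + 1)" by (simp add: GL_monom)
    moreover have "GL (pderiv (monom a i)) = real i * a * mom (i - 1)"
      by (simp add: pderiv_monom GL_monom)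
    ultimately show ?thesis using mom_rec[of i] by (simp add: algebra_simps)
  qed
  have "GL (pderiv ?S) = GL ([:0, 2:] * ?S)"
    by (simp add: pderiv_sum' GL_sum sum_distrib_left m)
  then show ?thesis by (simp only: poly_as_sum_of_monoms)
qed

lemma GL_HP_HP: "GL (HP j * HP k) = (if j = k then 2 ^ k * fact k * sqrt pi else 0)"
proof (induction k arbitrary: j)
  case 0
  have "GL (HP (Suc i)) = 0" for i
  proof -
    have "GL (HP (Suc i)) = GL ([:0, 2:] * HP i) - GL (pderiv (HP i))"
      by (simp add: HP_Suc' GL_diff)
    then show ?thesis by (simp add: GL_pderiv)
  qed
  moreover have "GL 1 = sqrt pi" by (simp add: GL_eq mom_def)
  ultimately show ?case by (cases j) auto
next
  case (Suc k)
  have "GL (HP j * HP (Suc k)) = GL ([:0, 2:] * (HP j * HP k)) - GL (HP j * pderiv (HP k))"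
    by (simp add: HP_Suc' GL_diff algebra_simps)
  also have "\<dots> = GL (pderiv (HP j) * HP k)"
  proof -
    have "GL ([:0, 2:] * (HP j * HP k)) = GL (pderiv (HP j * HP k))" by (rule GL_pderiv[symmetric])
    also have "\<dots> = GL (HP j * pderiv (HP k)) + GL (HP k * pderiv (HP j))"
      by (simp add: pderiv_mult GL_add)
    finally show ?thesis by (simp add: mult.commute)
  qed
  also have "\<dots> = 2 * real j * GL (HP (j - 1) * HP k)"
    by (simp add: pderiv_HP GL_smult)
  also have "\<dots> = (if j = Suc k then 2 ^ Suc k * fact (Suc k) * sqrt pi else 0)"
    using Suc by (cases j) auto
  finally show ?case .
qed

lemma x_HP: "[:0, 1:] * HP k = smult (1/2) (HP (Suc k)) + smult (real k) (HP (k - 1))"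
proof -
  have "HP (Suc k) = [:0, 2:] * HP k - smult (2 * real k) (HP (k - 1))" by (rule HP_Suc)
  then have "[:0, 2:] * HP k = HP (Suc k) + smult (2 * real k) (HP (k - 1))" by simp
  moreover have "[:0, 2:] * HP k = smult 2 ([:0, 1:] * HP k)" by (simp add: mult_pCons_left)
  ultimately have "smult 2 ([:0, 1:] * HP k) = HP (Suc k) + smult (2 * real k) (HP (k - 1))" by simp
  then have "smult (1/2) (smult 2 ([:0, 1:] * HP k)) = smult (1/2) (HP (Suc k) + smult (2 * real k) (HP (k - 1)))"
    by simp
  then show ?thesis by (simp add: smult_add_right)
qed

lemma GL_x2_HP: "GL (([:0, 1:] * HP k) * ([:0, 1:] * HP k)) = (real k + 1/2) * (2 ^ k * fact k * sqrt pi)"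
proof -
  have "GL (([:0, 1:] * HP k) * ([:0, 1:] * HP k)) =
      1/4 * GL (HP (Suc k) * HP (Suc k)) + real k * GL (HP (Suc k) * HP (k - 1))
      + real k * real k * GL (HP (k - 1) * HP (k - 1))"
  proof -
    have e: "(smult a A + smult b B) * (smult a A + smult b B) = smult (a*a) (A*A) + smult (a*b) (A*B) + smult (a*b) (A*B) + smult (b*b) (B*B)"
      for a b :: real and A B :: "real poly"
      by (simp add: algebra_simps)
    show ?thesis unfolding x_HP e by (simp add: GL_add GL_smult GL_two)
  qed
  also have "\<dots> = 1/4 * (2 ^ Suc k * fact (Suc k) * sqrt pi) + real k * real k * (2 ^ (k - 1) * fact (k - 1) * sqrt pi)"
    by (simp add: GL_HP_HP)
  also have "\<dots> = (real k + 1/2) * (2 ^ k * fact k * sqrt pi)"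
  proof (cases k)
    case 0 then show ?thesis by simp
  next
    case (Suc l)
    then show ?thesis by (simp add: algebra_simps)
  qed
  finally show ?thesis .
qed

lemma HP_span: "degree P \<le> N \<Longrightarrow> \<exists>d. P = (\<Sum>j\<le>N. smult (d j) (HP j))"
proof (induction N arbitrary: P)
  case 0
  then have "P = [:coeff P 0:]" by (metis degree_0_id le_zero_eq)
  then have "P = (\<Sum>j\<le>0. smult ((\<lambda>_. coeff P 0) j) (HP j))" by simp
  then show ?case by (intro exI[of _ "\<lambda>_. coeff P 0"])
next
  case (Suc N)
  define c where "c = coeff P (Suc N) / 2 ^ Suc N"
  define Q where "Q = P - smult c (HP (Suc N))"
  have "degree Q \<le> N"
  proof (rule degree_le, intro allI impI)
    fix i assume "N < i"
    show "coeff Q i = 0"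
    proof (cases "i = Suc N")
      case True
      then show ?thesis using coeff_HP[of "Suc N"] by (simp add: Q_def c_def)
    next
      case False
      with \<open>N < i\<close> have "Suc N < i" by simp
      then show ?thesis using coeff_HP[of "Suc N"] Suc.prems
        by (simp add: Q_def coeff_eq_0)
    qed
  qed
  then obtain d where d: "Q = (\<Sum>j\<le>N. smult (d j) (HP j))" using Suc.IH by blast
  have "P = Q + smult c (HP (Suc N))" by (simp add: Q_def)
  also have "\<dots> = (\<Sum>j\<le>Suc N. smult ((d(Suc N := c)) j) (HP j))"
    unfolding d by (simp add: sum.atMost_Suc)
  finally show ?case by blast
qed

definition nrm :: "nat \<Rightarrow> real" where "nrm k = sqrt (2 ^ k * fact k * sqrt pi)"

lemma nrm_pos: "nrm k > 0" by (simp add: nrm_def)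

lemma nrm_nz[simp]: "nrm k \<noteq> 0" using nrm_pos[of k] by simp

lemma nrm_sq: "nrm k * nrm k = 2 ^ k * fact k * sqrt pi"
  unfolding nrm_def by (simp add: real_sqrt_mult_self)

lemma hf_eq: "hermite_fun k x = poly (HP k) x * exp (- x\<^sup>2 / 2) / nrm k"
  by (simp add: hermite_fun_def nrm_def poly_HP)

lemma exp_half_sq: "exp (- x\<^sup>2 / 2) * exp (- x\<^sup>2 / 2) = exp (- (x::real)\<^sup>2)"
  by (simp add: exp_add[symmetric])

lemma hf_cont: "continuous_on UNIV (hermite_fun k)"
  unfolding hf_eq[abs_def] by (intro continuous_intros) auto

lemma hf_meas[measurable]: "hermite_fun k \<in> borel_measurable borel"
  by (rule borel_measurable_continuous_onI[OF hf_cont])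

lemma int_poly_gauss:
  fixes c :: real
  assumes c: "c > 0"
  shows "integrable lborel (\<lambda>x. poly P x * exp (- c * x\<^sup>2))"
proof -
  define s where "s = sqrt c"
  have s: "s > 0" "s * s = c" using c by (auto simp: s_def)
  have "integrable lborel (\<lambda>x. poly (pcompose P [:0, 1/s:]) x * exp (- x\<^sup>2))"
    by (rule GL_integrable)
  moreover have "(\<lambda>x. poly (pcompose P [:0, 1/s:]) x * exp (- x\<^sup>2)) = (\<lambda>x. (\<lambda>y. poly P y * exp (- c * y\<^sup>2)) (0 + (1/s) * x))"
    using s by (auto simp: poly_pcompose power2_eq_square field_simps)
  ultimately have "integrable lborel (\<lambda>x. (\<lambda>y. poly P y * exp (- c * y\<^sup>2)) (0 + (1/s) * x))" by simp
  then show ?thesis using s by (subst (asm) lborel_integrable_real_affine_iff) auto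
qed

lemma gauss_integral:
  fixes c :: real
  assumes c: "c > 0"
  shows "(\<integral>x. exp (- c * x\<^sup>2) \<partial>lborel) = sqrt pi / sqrt c"
proof -
  define s where "s = sqrt c"
  have s: "s > 0" "s * s = c" using c by (auto simp: s_def)
  have "(\<integral>x. exp (- c * x\<^sup>2) \<partial>lborel) = \<bar>1/s\<bar> *\<^sub>R (\<integral>x. exp (- c * (0 + (1/s) * x)\<^sup>2) \<partial>lborel)"
    by (rule lborel_integral_real_affine) (use s in auto)
  also have "(\<lambda>x. exp (- c * (0 + (1/s) * x)\<^sup>2)) = (\<lambda>x. poly 1 x * exp (- x\<^sup>2))"
    using s by (auto simp: power2_eq_square field_simps)
  also have "(\<integral>x. poly 1 x * exp (- x\<^sup>2) \<partial>lborel) = sqrt pi"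
    using GL_eq[of 1] by (simp add: GL_def mom_def)
  finally show ?thesis using s by (simp add: s_def)
qed

lemma hf_prod_gauss:
  "hermite_fun j x * hermite_fun k x * exp (- c * x\<^sup>2) = poly (HP j * HP k) x * exp (- (1 + c) * x\<^sup>2) / (nrm j * nrm k)"
proof -
  have "exp (- x\<^sup>2 / 2) * exp (- x\<^sup>2 / 2) * exp (- c * x\<^sup>2) = exp (- (1 + c) * x\<^sup>2)"
    by (simp add: exp_add[symmetric] algebra_simps)
  then show ?thesis unfolding hf_eq by (simp add: field_simps)
qed

lemma int_hf_gauss:
  assumes "c > -1"
  shows "integrable lborel (\<lambda>x. hermite_fun j x * hermite_fun k x * exp (- c * x\<^sup>2))"
  unfolding hf_prod_gauss using assms by (intro integrable_divide int_poly_gauss) simp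

lemma hf_orth: "has_bochner_integral lborel (\<lambda>x. hermite_fun j x * hermite_fun k x) (if j = k then 1 else 0)"
proof -
  have e: "hermite_fun j x * hermite_fun k x = poly (HP j * HP k) x * exp (- x\<^sup>2) / (nrm j * nrm k)" for x
    using hf_prod_gauss[of j x k 0] by simp
  have "has_bochner_integral lborel (\<lambda>x. poly (HP j * HP k) x * exp (- x\<^sup>2) / (nrm j * nrm k)) (GL (HP j * HP k) / (nrm j * nrm k))"
    unfolding GL_def by (intro has_bochner_integral_divide_zero has_bochner_integral_integrable GL_integrable)
  moreover have "GL (HP j * HP k) / (nrm j * nrm k) = (if j = k then 1 else 0)"
    using nrm_sq[of k] nrm_pos[of k] by (simp add: GL_HP_HP)
  ultimately show ?thesis unfolding e by simp
qed

lemma hf_x2: "has_bochner_integral lborel (\<lambda>x. x\<^sup>2 * (hermite_fun k x)\<^sup>2) (real k + 1/2)"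
proof -
  have e: "x\<^sup>2 * (hermite_fun k x)\<^sup>2 = poly (([:0, 1:] * HP k) * ([:0, 1:] * HP k)) x * exp (- x\<^sup>2) / (nrm k * nrm k)" for x
    using hf_prod_gauss[of k x k 0] by (simp add: power2_eq_square algebra_simps)
  have "has_bochner_integral lborel (\<lambda>x. poly (([:0, 1:] * HP k) * ([:0, 1:] * HP k)) x * exp (- x\<^sup>2) / (nrm k * nrm k))
      (GL (([:0, 1:] * HP k) * ([:0, 1:] * HP k)) / (nrm k * nrm k))"
    unfolding GL_def by (intro has_bochner_integral_divide_zero has_bochner_integral_integrable GL_integrable)
  moreover have "GL (([:0, 1:] * HP k) * ([:0, 1:] * HP k)) / (nrm k * nrm k) = real k + 1/2"
    unfolding GL_x2_HP nrm_sq[symmetric] by simp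
  ultimately show ?thesis unfolding e by simp
qed

lemma hf_span: "\<exists>d. \<forall>x. hermite_fun k x * poly T x = (\<Sum>j\<le>degree (HP k * T). d j * hermite_fun j x)"
proof -
  obtain d where d: "HP k * T = (\<Sum>j\<le>degree (HP k * T). smult (d j) (HP j))"
    using HP_span[OF order_refl] by blast
  have "hermite_fun k x * poly T x = (\<Sum>j\<le>degree (HP k * T). (d j * nrm j / nrm k) * hermite_fun j x)" for x
  proof -
    have "hermite_fun k x * poly T x = poly (HP k * T) x * exp (- x\<^sup>2 / 2) / nrm k"
      by (simp add: hf_eq)
    also have "\<dots> = (\<Sum>j\<le>degree (HP k * T). d j * poly (HP j) x) * exp (- x\<^sup>2 / 2) / nrm k"
      by (subst d) (simp add: poly_sum)
    also have "\<dots> = (\<Sum>j\<le>degree (HP k * T). d j * poly (HP j) x * exp (- x\<^sup>2 / 2) / nrm k)"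
      by (simp add: sum_distrib_right sum_divide_distrib)
    also have "\<dots> = (\<Sum>j\<le>degree (HP k * T). (d j * nrm j / nrm k) * hermite_fun j x)"
      by (intro sum.cong refl) (simp add: hf_eq)
    finally show ?thesis .
  qed
  then show ?thesis by (intro exI[of _ "\<lambda>j. d j * nrm j / nrm k"]) simp
qed

lemma vec_nth_meas[measurable]: "(\<lambda>x::real^'n::finite. x $ i) \<in> borel_measurable borel"
  by (rule borel_measurable_continuous_onI[OF linear_continuous_on[OF bounded_linear_vec_nth]])

definition hr :: "('n::finite \<Rightarrow> nat) \<Rightarrow> real^'n \<Rightarrow> real" where
  "hr \<alpha> x = (\<Prod>i\<in>UNIV. hermite_fun (\<alpha> i) (x $ i))"

lemma hermite_nd_hr: "hermite_nd \<alpha> x = complex_of_real (hr \<alpha> x)"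
  by (simp add: hermite_nd_def hr_def)

lemma hr_meas[measurable]: "hr \<alpha> \<in> borel_measurable borel"
  unfolding hr_def by measurable

lemma hermite_nd_meas[measurable]: "hermite_nd \<alpha> \<in> borel_measurable borel"
  unfolding hermite_nd_hr[abs_def] by measurable

definition phi :: "real \<Rightarrow> real^'n::finite \<Rightarrow> real" where
  "phi a x = (\<Prod>i\<in>UNIV. exp (- a * (x $ i)\<^sup>2))"

lemma phi_meas[measurable]: "phi a \<in> borel_measurable borel"
  unfolding phi_def by measurable

lemma phi_pos: "phi a x > 0" unfolding phi_def by (simp add: prod_pos)

lemma phi_le1: "a \<ge> 0 \<Longrightarrow> phi a x \<le> 1"
  unfolding phi_def by (intro prod_le_1) (auto simp: mult_nonneg_nonneg)

lemma hr_hr_gauss: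
  assumes "c > -1"
  shows "integrable lborel (\<lambda>x::real^'n::finite. hr \<alpha> x * hr \<beta> x * phi c x)"
    and "(\<integral>x. hr \<alpha> x * hr \<beta> x * phi c x \<partial>lborel) = (\<Prod>i\<in>UNIV. \<integral>s. hermite_fun (\<alpha> i) s * hermite_fun (\<beta> i) s * exp (- c * s\<^sup>2) \<partial>lborel)"
proof -
  have e: "hr \<alpha> x * hr \<beta> x * phi c x = (\<Prod>i\<in>UNIV. (\<lambda>s. hermite_fun (\<alpha> i) s * hermite_fun (\<beta> i) s * exp (- c * s\<^sup>2)) (x $ i))" for x
    unfolding hr_def phi_def by (simp add: prod.distrib)
  have i: "integrable lborel (\<lambda>s. hermite_fun (\<alpha> i) s * hermite_fun (\<beta> i) s * exp (- c * s\<^sup>2))" for i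
    using int_hf_gauss[OF assms] .
  show "integrable lborel (\<lambda>x::real^'n::finite. hr \<alpha> x * hr \<beta> x * phi c x)"
    unfolding e by (rule lborel_vec_prod(1)[OF i])
  show "(\<integral>x. hr \<alpha> x * hr \<beta> x * phi c x \<partial>lborel) = (\<Prod>i\<in>UNIV. \<integral>s. hermite_fun (\<alpha> i) s * hermite_fun (\<beta> i) s * exp (- c * s\<^sup>2) \<partial>lborel)"
    unfolding e by (rule lborel_vec_prod(2)[OF i])
qed

lemma phi0: "phi 0 x = 1" by (simp add: phi_def)

lemma hr_orth:
  shows "integrable lborel (\<lambda>x::real^'n::finite. hr \<alpha> x * hr \<beta> x)"
    and "(\<integral>x. hr \<alpha> x * hr \<beta> x \<partial>lborel) = (if \<alpha> = \<beta> then 1 else 0)"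
proof -
  show "integrable lborel (\<lambda>x::real^'n::finite. hr \<alpha> x * hr \<beta> x)"
    using hr_hr_gauss(1)[of 0 \<alpha> \<beta>] by (simp add: phi0)
  have "(\<integral>x. hr \<alpha> x * hr \<beta> x \<partial>lborel) = (\<Prod>i\<in>UNIV. \<integral>s. hermite_fun (\<alpha> i) s * hermite_fun (\<beta> i) s \<partial>lborel)"
    using hr_hr_gauss(2)[of 0 \<alpha> \<beta>] by (simp add: phi0)
  also have "\<dots> = (\<Prod>i\<in>UNIV. if \<alpha> i = \<beta> i then 1 else 0)"
    by (intro prod.cong refl has_bochner_integral_integral_eq hf_orth)
  also have "\<dots> = (if \<alpha> = \<beta> then 1 else 0)"
  proof (cases "\<alpha> = \<beta>")
    case False
    then obtain i where "\<alpha> i \<noteq> \<beta> i" by auto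
    then have "(\<Prod>i\<in>UNIV. if \<alpha> i = \<beta> i then 1 else 0) = (0::real)"
      by (intro prod_zero) auto
    then show ?thesis using False by simp
  qed simp
  finally show "(\<integral>x. hr \<alpha> x * hr \<beta> x \<partial>lborel) = (if \<alpha> = \<beta> then 1 else 0)" .
qed

lemma sq_integrable_hermite_nd: "sq_integrable (hermite_nd \<alpha>)"
  unfolding sq_integrable_def
proof
  show "hermite_nd \<alpha> \<in> borel_measurable lborel" by simp
  have "(\<lambda>x. (cmod (hermite_nd \<alpha> x))\<^sup>2) = (\<lambda>x. hr \<alpha> x * hr \<alpha> x)"
    by (simp add: hermite_nd_hr power2_eq_square)
  then show "integrable lborel (\<lambda>x. (cmod (hermite_nd \<alpha> x))\<^sup>2)"
    using hr_orth(1)[of \<alpha> \<alpha>] by simp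
qed

lemma L2_inner_hermite: "L2_inner (hermite_nd \<alpha>) (hermite_nd \<beta>) = (if \<alpha> = \<beta> then 1 else 0)"
proof -
  have "L2_inner (hermite_nd \<alpha>) (hermite_nd \<beta>) = (\<integral>x. complex_of_real (hr \<alpha> x * hr \<beta> x) \<partial>lborel)"
    unfolding L2_inner_def by (simp add: hermite_nd_hr)
  also have "\<dots> = (if \<alpha> = \<beta> then 1 else 0)"
    by (simp only: integral_complex_of_real hr_orth(2)) simp
  finally show ?thesis .
qed

lemma hf_gauss_lower:
  assumes a: "a \<ge> 0"
  shows "(\<integral>s. hermite_fun k s * hermite_fun k s * exp (- a * s\<^sup>2) \<partial>lborel) \<ge> 1 - a * (real k + 1/2)"
proof -
  have i1: "integrable lborel (\<lambda>s. hermite_fun k s * hermite_fun k s)"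
    using hf_orth has_bochner_integral_iff by blast
  have i2: "integrable lborel (\<lambda>s. s\<^sup>2 * (hermite_fun k s)\<^sup>2)"
    using hf_x2 has_bochner_integral_iff by blast
  have "1 - a * (real k + 1/2) = (\<integral>s. hermite_fun k s * hermite_fun k s - a * (s\<^sup>2 * (hermite_fun k s)\<^sup>2) \<partial>lborel)"
    using hf_orth[of k k] hf_x2[of k] i1 i2
    by (simp add: has_bochner_integral_integral_eq)
  also have "\<dots> \<le> (\<integral>s. hermite_fun k s * hermite_fun k s * exp (- a * s\<^sup>2) \<partial>lborel)"
  proof (rule integral_mono)
    show "integrable lborel (\<lambda>s. hermite_fun k s * hermite_fun k s - a * (s\<^sup>2 * (hermite_fun k s)\<^sup>2))"
      using i1 i2 by simp
    show "integrable lborel (\<lambda>s. hermite_fun k s * hermite_fun k s * exp (- a * s\<^sup>2))"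
      using int_hf_gauss[of a k k] a by simp
    fix s :: real
    have "1 - a * s\<^sup>2 \<le> exp (- a * s\<^sup>2)" using exp_ge_add_one_self[of "- a * s\<^sup>2"] by simp
    then have "(hermite_fun k s * hermite_fun k s) * (1 - a * s\<^sup>2) \<le> (hermite_fun k s * hermite_fun k s) * exp (- a * s\<^sup>2)"
      by (intro mult_left_mono) auto
    then show "hermite_fun k s * hermite_fun k s - a * (s\<^sup>2 * (hermite_fun k s)\<^sup>2) \<le> hermite_fun k s * hermite_fun k s * exp (- a * s\<^sup>2)"
      by (simp add: algebra_simps power2_eq_square)
  qed
  finally show ?thesis .
qed

lemma poly_meas[measurable]: "(poly P :: real \<Rightarrow> real) \<in> borel_measurable borel"
  by (rule borel_measurable_continuous_onI) (intro continuous_intros)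

definition Tp :: "real \<Rightarrow> nat \<Rightarrow> real poly" where
  "Tp a m = (\<Sum>l\<le>m. monom ((- a) ^ l / fact l) (2 * l))"

lemma poly_Tp: "poly (Tp a m) s = (\<Sum>l\<le>m. (- a * s\<^sup>2) ^ l /\<^sub>R fact l)"
proof -
  have t: "(- a) ^ l / fact l * s ^ (2 * l) = (- a * s\<^sup>2) ^ l /\<^sub>R fact l" for l
  proof -
    have "(- a * s\<^sup>2) ^ l = (- a) ^ l * s ^ (2 * l)"
      by (simp only: power_mult power_mult_distrib)
    then show ?thesis by (simp add: divide_inverse)
  qed
  show ?thesis unfolding Tp_def poly_sum poly_monom by (intro sum.cong refl t)
qed

lemma Tp_lim: "(\<lambda>m. poly (Tp a m) s) \<longlonglongrightarrow> exp (- a * s\<^sup>2)"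
  unfolding poly_Tp using exp_converges[of "- a * s\<^sup>2"] by (simp add: sums_def_le)

lemma Tp_bound:
  assumes a: "a \<ge> 0"
  shows "\<bar>poly (Tp a m) s\<bar> \<le> exp (a * s\<^sup>2)"
proof -
  have "\<bar>poly (Tp a m) s\<bar> \<le> (\<Sum>l\<le>m. \<bar>(- a * s\<^sup>2) ^ l /\<^sub>R fact l\<bar>)"
    unfolding poly_Tp by (rule sum_abs)
  also have "\<dots> = (\<Sum>l\<le>m. (a * s\<^sup>2) ^ l /\<^sub>R fact l)"
    using a by (intro sum.cong refl) (simp add: power_abs abs_mult)
  also have "\<dots> \<le> (\<Sum>l. (a * s\<^sup>2) ^ l /\<^sub>R fact l)"
    using a by (intro sum_le_suminf) (auto simp: summable_exp)
  also have "\<dots> = exp (a * s\<^sup>2)"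
    using exp_converges[of "a * s\<^sup>2"] by (simp add: sums_iff)
  finally show ?thesis .
qed

definition Dm :: "real \<Rightarrow> nat \<Rightarrow> real^'n::finite \<Rightarrow> real" where
  "Dm a m x = (\<Prod>i\<in>UNIV. poly (Tp a m) (x $ i))"

lemma Dm_meas[measurable]: "Dm a m \<in> borel_measurable borel"
  unfolding Dm_def by measurable

lemma hr_Dm_span:
  "\<exists>G cc. finite G \<and> (\<forall>x. hr \<alpha> x * Dm a m x = (\<Sum>\<gamma>\<in>G. cc \<gamma> * hr \<gamma> x))"
proof -
  define L where "L i = degree (HP (\<alpha> i) * Tp a m)" for i
  have "\<forall>i. \<exists>d. \<forall>s. hermite_fun (\<alpha> i) s * poly (Tp a m) s = (\<Sum>j\<le>L i. d j * hermite_fun j s)"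
    unfolding L_def using hf_span by blast
  from choice[OF this] obtain dd where dd0: "\<forall>i s. hermite_fun (\<alpha> i) s * poly (Tp a m) s = (\<Sum>j\<le>L i. dd i j * hermite_fun j s)"
    by blast
  then have dd: "\<And>i s. hermite_fun (\<alpha> i) s * poly (Tp a m) s = (\<Sum>j\<le>L i. dd i j * hermite_fun j s)"
    by blast
  define G where "G = PiE UNIV (\<lambda>i. {..L i})"
  have eq: "hr \<alpha> x * Dm a m x = (\<Sum>\<gamma>\<in>G. (\<Prod>i\<in>UNIV. dd i (\<gamma> i)) * hr \<gamma> x)" for x
  proof -
    have "hr \<alpha> x * Dm a m x = (\<Prod>i\<in>UNIV. hermite_fun (\<alpha> i) (x $ i) * poly (Tp a m) (x $ i))"
      unfolding hr_def Dm_def by (simp add: prod.distrib)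
    also have "\<dots> = (\<Prod>i\<in>UNIV. \<Sum>j\<in>{..L i}. dd i j * hermite_fun j (x $ i))"
      by (simp add: dd)
    also have "\<dots> = (\<Sum>\<gamma>\<in>G. \<Prod>i\<in>UNIV. dd i (\<gamma> i) * hermite_fun (\<gamma> i) (x $ i))"
      unfolding G_def by (rule prod_sum_PiE) auto
    also have "\<dots> = (\<Sum>\<gamma>\<in>G. (\<Prod>i\<in>UNIV. dd i (\<gamma> i)) * hr \<gamma> x)"
      unfolding hr_def by (simp add: prod.distrib)
    finally show ?thesis .
  qed
  have fin: "finite G" unfolding G_def by (intro finite_PiE) auto
  show ?thesis
    by (rule exI[of _ G], rule exI[of _ "\<lambda>\<gamma>. \<Prod>i\<in>UNIV. dd i (\<gamma> i)"]) (use eq fin in auto)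
qed

lemma L2_mult_int:
  fixes f g :: "real^'n::finite \<Rightarrow> complex"
  assumes [measurable]: "f \<in> borel_measurable lborel" "g \<in> borel_measurable lborel"
    and fi: "integrable lborel (\<lambda>x. (cmod (f x))\<^sup>2)" and gi: "integrable lborel (\<lambda>x. (cmod (g x))\<^sup>2)"
  shows "integrable lborel (\<lambda>x. f x * g x)"
proof (rule Bochner_Integration.integrable_bound[of _ "\<lambda>x. (cmod (f x))\<^sup>2 + (cmod (g x))\<^sup>2"])
  show "integrable lborel (\<lambda>x. (cmod (f x))\<^sup>2 + (cmod (g x))\<^sup>2)" using fi gi by simp
  show "(\<lambda>x. f x * g x) \<in> borel_measurable lborel" by measurable
  show "AE x in lborel. norm (f x * g x) \<le> norm ((cmod (f x))\<^sup>2 + (cmod (g x))\<^sup>2)"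
  proof (intro AE_I2)
    fix x
    have "cmod (f x) * cmod (g x) \<le> (cmod (f x))\<^sup>2 + (cmod (g x))\<^sup>2"
      using sum_squares_bound[of "cmod (f x)" "cmod (g x)"]
        mult_nonneg_nonneg[OF norm_ge_zero[of "f x"] norm_ge_zero[of "g x"]]
      unfolding power2_eq_square by linarith
    then show "norm (f x * g x) \<le> norm ((cmod (f x))\<^sup>2 + (cmod (g x))\<^sup>2)"
      by (simp add: norm_mult)
  qed
qed

lemma hermite_nd_eq: "hermite_nd \<gamma> = (\<lambda>x. complex_of_real (hr \<gamma> x))"
  by (rule ext) (simp add: hermite_nd_hr)

lemma phi_sq: "phi c x * phi c x = phi (2 * c) x"
  unfolding phi_def by (simp add: prod.distrib[symmetric] exp_add[symmetric] mult.assoc)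

lemma Dm_bound: "a \<ge> 0 \<Longrightarrow> \<bar>Dm a m x\<bar> \<le> phi (- a) x"
  unfolding Dm_def phi_def abs_prod
  by (intro prod_mono) (simp add: Tp_bound)

lemma Dm_lim: "(\<lambda>m. Dm a m x) \<longlonglongrightarrow> phi a x"
  unfolding Dm_def phi_def by (intro tendsto_prod Tp_lim)

lemma int_hW:
  fixes W :: "real^'n::finite \<Rightarrow> complex"
  assumes W: "sq_integrable W"
  shows "integrable lborel (\<lambda>x. complex_of_real (hr \<gamma> x) * W x)"
proof -
  have "integrable lborel (\<lambda>x. hermite_nd \<gamma> x * W x)"
    using sq_integrable_hermite_nd[of \<gamma>] W unfolding sq_integrable_def
    by (intro L2_mult_int) auto
  then show ?thesis by (simp add: hermite_nd_hr)
qed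

lemma key_orth:
  fixes W :: "real^'n::finite \<Rightarrow> complex" and \<alpha> :: "'n \<Rightarrow> nat"
  assumes W: "sq_integrable W" and orth: "\<And>\<gamma>. L2_inner (hermite_nd \<gamma>) W = 0"
    and a: "0 \<le> a" "a < 1/2"
  shows "(\<integral>x. complex_of_real (hr \<alpha> x * phi a x) * W x \<partial>lborel) = 0"
proof -
  have Wm[measurable]: "W \<in> borel_measurable lborel" and Wi: "integrable lborel (\<lambda>x. (cmod (W x))\<^sup>2)"
    using W by (auto simp: sq_integrable_def)
  have inner: "(\<integral>x. complex_of_real (hr \<gamma> x) * W x \<partial>lborel) = 0" for \<gamma>
    using orth[of \<gamma>] by (simp add: L2_inner_def hermite_nd_hr)
  have step1: "(\<integral>x. complex_of_real (hr \<alpha> x * Dm a m x) * W x \<partial>lborel) = 0" for m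
  proof -
    obtain G cc where G: "finite G" and eq: "\<And>x. hr \<alpha> x * Dm a m x = (\<Sum>\<gamma>\<in>G. cc \<gamma> * hr \<gamma> x)"
      using hr_Dm_span[of \<alpha> a m] by blast
    have "(\<integral>x. complex_of_real (hr \<alpha> x * Dm a m x) * W x \<partial>lborel)
        = (\<integral>x. (\<Sum>\<gamma>\<in>G. complex_of_real (cc \<gamma>) * (complex_of_real (hr \<gamma> x) * W x)) \<partial>lborel)"
      by (simp add: eq sum_distrib_right mult.assoc)
    also have "\<dots> = (\<Sum>\<gamma>\<in>G. (\<integral>x. complex_of_real (cc \<gamma>) * (complex_of_real (hr \<gamma> x) * W x) \<partial>lborel))"
      by (rule Bochner_Integration.integral_sum[where I=G and M=lborel and f="\<lambda>\<gamma> x. complex_of_real (cc \<gamma>) * (complex_of_real (hr \<gamma> x) * W x)"])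
         (auto intro!: integrable_mult_right int_hW[OF W])
    also have "\<dots> = (\<Sum>\<gamma>\<in>G. complex_of_real (cc \<gamma>) * (\<integral>x. complex_of_real (hr \<gamma> x) * W x \<partial>lborel))"
      by simp
    also have "\<dots> = 0" by (simp add: inner)
    finally show ?thesis .
  qed
  have hE: "integrable lborel (\<lambda>x. (cmod (complex_of_real (hr \<alpha> x * phi (-a) x)))\<^sup>2)"
  proof -
    have "integrable lborel (\<lambda>x. hr \<alpha> x * hr \<alpha> x * phi (2 * (-a)) x)"
      using a by (intro hr_hr_gauss(1)) simp
    moreover have "(cmod (complex_of_real (hr \<alpha> x * phi (-a) x)))\<^sup>2 = hr \<alpha> x * hr \<alpha> x * phi (2 * (-a)) x" for x
    proof -
      have "(cmod (complex_of_real (hr \<alpha> x * phi (-a) x)))\<^sup>2 = (hr \<alpha> x * phi (-a) x)\<^sup>2"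
        by (simp only: norm_of_real power2_abs)
      also have "\<dots> = hr \<alpha> x * hr \<alpha> x * (phi (-a) x * phi (-a) x)"
        by (simp add: power2_eq_square mult_ac)
      finally show ?thesis by (simp only: phi_sq)
    qed
    ultimately show ?thesis by simp
  qed
  have w_int: "integrable lborel (\<lambda>x. cmod (complex_of_real (hr \<alpha> x * phi (-a) x) * W x))"
    by (intro integrable_norm L2_mult_int hE Wi) auto
  have lim: "(\<lambda>m. \<integral>x. complex_of_real (hr \<alpha> x * Dm a m x) * W x \<partial>lborel) \<longlonglongrightarrow> (\<integral>x. complex_of_real (hr \<alpha> x * phi a x) * W x \<partial>lborel)"
  proof (rule integral_dominated_convergence[where w = "\<lambda>x. cmod (complex_of_real (hr \<alpha> x * phi (-a) x) * W x)"])
    show "(\<lambda>x. complex_of_real (hr \<alpha> x * phi a x) * W x) \<in> borel_measurable lborel" by measurable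
    show "(\<lambda>x. complex_of_real (hr \<alpha> x * Dm a m x) * W x) \<in> borel_measurable lborel" for m by measurable
    show "integrable lborel (\<lambda>x. cmod (complex_of_real (hr \<alpha> x * phi (-a) x) * W x))" by (rule w_int)
    show "AE x in lborel. (\<lambda>m. complex_of_real (hr \<alpha> x * Dm a m x) * W x) \<longlonglongrightarrow> complex_of_real (hr \<alpha> x * phi a x) * W x"
      by (intro AE_I2 tendsto_intros Dm_lim)
    show "AE x in lborel. norm (complex_of_real (hr \<alpha> x * Dm a m x) * W x) \<le> cmod (complex_of_real (hr \<alpha> x * phi (-a) x) * W x)" for m
    proof (intro AE_I2)
      fix x :: "real^'n"
      have "\<bar>Dm a m x\<bar> \<le> \<bar>phi (-a) x\<bar>" using Dm_bound[OF a(1), of m x] phi_pos[of "-a" x] by simp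
      then have "\<bar>hr \<alpha> x\<bar> * \<bar>Dm a m x\<bar> * cmod (W x) \<le> \<bar>hr \<alpha> x\<bar> * \<bar>phi (-a) x\<bar> * cmod (W x)"
        by (intro mult_right_mono mult_left_mono) auto
      then show "norm (complex_of_real (hr \<alpha> x * Dm a m x) * W x) \<le> cmod (complex_of_real (hr \<alpha> x * phi (-a) x) * W x)"
        by (simp add: norm_mult abs_mult)
    qed
  qed
  with step1 show ?thesis by (simp add: LIMSEQ_const_iff)
qed

lemma cmod_add_sq: "(cmod (u + v))\<^sup>2 = (cmod u)\<^sup>2 + 2 * Re (cnj u * v) + (cmod v)\<^sup>2"
  unfolding cmod_power2 by (simp add: power2_eq_square algebra_simps)

lemma cnj_meas[measurable]: "f \<in> borel_measurable M \<Longrightarrow> (\<lambda>x. cnj (f x)) \<in> borel_measurable M"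
  by (rule borel_measurable_continuous_on[OF continuous_on_cnj[OF continuous_on_id]])

lemma cmod_diff_sq_le: "(cmod (u - v))\<^sup>2 \<le> 2 * (cmod u)\<^sup>2 + 2 * (cmod v)\<^sup>2"
proof -
  have "cmod (u - v) \<le> cmod u + cmod v" by (rule norm_triangle_ineq4)
  then have "(cmod (u - v))\<^sup>2 \<le> (cmod u + cmod v)\<^sup>2" by (intro power_mono) auto
  also have "\<dots> \<le> 2 * (cmod u)\<^sup>2 + 2 * (cmod v)\<^sup>2"
    using sum_squares_bound[of "cmod u" "cmod v"] by (simp add: power2_eq_square algebra_simps)
  finally show ?thesis .
qed

lemma L2_inner_diff:
  fixes f g1 g2 :: "real^'n::finite \<Rightarrow> complex"
  assumes "sq_integrable f" "sq_integrable g1" "sq_integrable g2"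
  shows "L2_inner f (\<lambda>x. g1 x - c * g2 x) = L2_inner f g1 - c * L2_inner f g2"
proof -
  have i: "integrable lborel (\<lambda>x. cnj (f x) * g x)" if "sq_integrable g" for g
    using assms(1) that unfolding sq_integrable_def by (intro L2_mult_int) auto
  have "L2_inner f (\<lambda>x. g1 x - c * g2 x) = (\<integral>x. cnj (f x) * g1 x - c * (cnj (f x) * g2 x) \<partial>lborel)"
    unfolding L2_inner_def by (simp add: algebra_simps)
  also have "\<dots> = L2_inner f g1 - c * L2_inner f g2"
    unfolding L2_inner_def using i[OF assms(2)] i[OF assms(3)] by simp
  finally show ?thesis .
qed

lemma herm_lower:
  fixes g :: "real^'n::finite \<Rightarrow> complex" and \<alpha> :: "'n \<Rightarrow> nat" and e :: complex
  assumes g: "sq_integrable g"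
    and coef: "\<And>\<gamma>. L2_inner (hermite_nd \<gamma>) g = e * L2_inner (hermite_nd \<gamma>) (hermite_nd \<alpha>)"
    and e: "cmod e = 1" and a: "0 \<le> a" "a < 1/2"
  shows "integrable lborel (\<lambda>x. (cmod (g x))\<^sup>2 * phi a x)"
    and "(\<integral>x. hr \<alpha> x * hr \<alpha> x * phi a x \<partial>lborel) \<le> (\<integral>x. (cmod (g x))\<^sup>2 * phi a x \<partial>lborel)"
proof -
  have gm[measurable]: "g \<in> borel_measurable lborel" and gi: "integrable lborel (\<lambda>x. (cmod (g x))\<^sup>2)"
    using g by (auto simp: sq_integrable_def)
  have hi: "integrable lborel (\<lambda>x. (cmod (hermite_nd \<alpha> x))\<^sup>2)"
    using sq_integrable_hermite_nd[of \<alpha>] by (simp add: sq_integrable_def)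
  show gphi: "integrable lborel (\<lambda>x. (cmod (g x))\<^sup>2 * phi a x)"
  proof (rule Bochner_Integration.integrable_bound[OF gi])
    show "(\<lambda>x. (cmod (g x))\<^sup>2 * phi a x) \<in> borel_measurable lborel" by measurable
    show "AE x in lborel. norm ((cmod (g x))\<^sup>2 * phi a x) \<le> norm ((cmod (g x))\<^sup>2)"
    proof (intro AE_I2)
      fix x
      have "(cmod (g x))\<^sup>2 * phi a x \<le> (cmod (g x))\<^sup>2"
        using phi_le1[OF a(1), of x] by (intro mult_left_le) auto
      then show "norm ((cmod (g x))\<^sup>2 * phi a x) \<le> norm ((cmod (g x))\<^sup>2)"
        using phi_pos[of a x] by (simp add: abs_mult)
    qed
  qed
  define W where "W x = g x - e * hermite_nd \<alpha> x" for x
  have Wm[measurable]: "W \<in> borel_measurable lborel" unfolding W_def by measurable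
  have sqW: "sq_integrable W"
    unfolding sq_integrable_def
  proof
    show "W \<in> borel_measurable lborel" by simp
    show "integrable lborel (\<lambda>x. (cmod (W x))\<^sup>2)"
    proof (rule Bochner_Integration.integrable_bound[of _ "\<lambda>x. 2 * (cmod (g x))\<^sup>2 + 2 * (cmod (hermite_nd \<alpha> x))\<^sup>2"])
      show "integrable lborel (\<lambda>x. 2 * (cmod (g x))\<^sup>2 + 2 * (cmod (hermite_nd \<alpha> x))\<^sup>2)"
        using gi hi by simp
      show "(\<lambda>x. (cmod (W x))\<^sup>2) \<in> borel_measurable lborel" by measurable
      show "AE x in lborel. norm ((cmod (W x))\<^sup>2) \<le> norm (2 * (cmod (g x))\<^sup>2 + 2 * (cmod (hermite_nd \<alpha> x))\<^sup>2)"
      proof (intro AE_I2)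
        fix x
        have "(cmod (W x))\<^sup>2 \<le> 2 * (cmod (g x))\<^sup>2 + 2 * (cmod (e * hermite_nd \<alpha> x))\<^sup>2"
          unfolding W_def by (rule cmod_diff_sq_le)
        then show "norm ((cmod (W x))\<^sup>2) \<le> norm (2 * (cmod (g x))\<^sup>2 + 2 * (cmod (hermite_nd \<alpha> x))\<^sup>2)"
          by (simp add: norm_mult e)
      qed
    qed
  qed
  have orthW: "L2_inner (hermite_nd \<gamma>) W = 0" for \<gamma>
  proof -
    have "L2_inner (hermite_nd \<gamma>) W = L2_inner (hermite_nd \<gamma>) g - e * L2_inner (hermite_nd \<gamma>) (hermite_nd \<alpha>)"
      unfolding W_def[abs_def] by (rule L2_inner_diff[OF sq_integrable_hermite_nd g sq_integrable_hermite_nd])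
    then show ?thesis by (simp add: coef)
  qed
  have K: "(\<integral>x. complex_of_real (hr \<alpha> x * phi a x) * W x \<partial>lborel) = 0"
    by (rule key_orth[OF sqW orthW a])
  have hphi: "integrable lborel (\<lambda>x. (cmod (complex_of_real (hr \<alpha> x * phi a x)))\<^sup>2)"
  proof -
    have "integrable lborel (\<lambda>x. hr \<alpha> x * hr \<alpha> x * phi (2 * a) x)"
      using a by (intro hr_hr_gauss(1)) simp
    moreover have "(cmod (complex_of_real (hr \<alpha> x * phi a x)))\<^sup>2 = hr \<alpha> x * hr \<alpha> x * phi (2 * a) x" for x
    proof -
      have "(cmod (complex_of_real (hr \<alpha> x * phi a x)))\<^sup>2 = (hr \<alpha> x * phi a x)\<^sup>2"
        by (simp only: norm_of_real power2_abs)
      also have "\<dots> = hr \<alpha> x * hr \<alpha> x * (phi a x * phi a x)"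
        by (simp add: power2_eq_square mult_ac)
      finally show ?thesis by (simp only: phi_sq)
    qed
    ultimately show ?thesis by simp
  qed
  define F where "F x = complex_of_real (hr \<alpha> x * phi a x) * W x" for x
  have Fi: "integrable lborel F"
    unfolding F_def using sqW hphi unfolding sq_integrable_def by (intro L2_mult_int) auto
  have hh: "integrable lborel (\<lambda>x. hr \<alpha> x * hr \<alpha> x * phi a x)"
    using a by (intro hr_hr_gauss(1)) simp
  have "(\<integral>x. hr \<alpha> x * hr \<alpha> x * phi a x \<partial>lborel)
      = (\<integral>x. hr \<alpha> x * hr \<alpha> x * phi a x + 2 * Re (cnj e * F x) \<partial>lborel)"
  proof -
    have "(\<integral>x. Re (cnj e * F x) \<partial>lborel) = Re (cnj e * (\<integral>x. F x \<partial>lborel))"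
      using Fi by simp
    also have "\<dots> = 0" using K by (simp add: F_def)
    finally have z: "(\<integral>x. Re (cnj e * F x) \<partial>lborel) = 0" .
    show ?thesis using hh Fi z by simp
  qed
  also have "\<dots> \<le> (\<integral>x. (cmod (g x))\<^sup>2 * phi a x \<partial>lborel)"
  proof (rule integral_mono)
    show "integrable lborel (\<lambda>x. hr \<alpha> x * hr \<alpha> x * phi a x + 2 * Re (cnj e * F x))"
      using hh Fi by simp
    show "integrable lborel (\<lambda>x. (cmod (g x))\<^sup>2 * phi a x)" by (rule gphi)
    fix x
    have gx: "g x = e * complex_of_real (hr \<alpha> x) + W x" by (simp add: W_def hermite_nd_hr)
    have "(cmod (g x))\<^sup>2 \<ge> (cmod (e * complex_of_real (hr \<alpha> x)))\<^sup>2 + 2 * Re (cnj (e * complex_of_real (hr \<alpha> x)) * W x)"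
      unfolding gx cmod_add_sq by simp
    also have "(cmod (e * complex_of_real (hr \<alpha> x)))\<^sup>2 = hr \<alpha> x * hr \<alpha> x"
      by (simp add: norm_mult e power2_eq_square)
    also have "Re (cnj (e * complex_of_real (hr \<alpha> x)) * W x) = hr \<alpha> x * Re (cnj e * W x)"
      by (simp add: algebra_simps)
    finally have ineq: "hr \<alpha> x * hr \<alpha> x + 2 * (hr \<alpha> x * Re (cnj e * W x)) \<le> (cmod (g x))\<^sup>2" .
    have "Re (cnj e * F x) = phi a x * (hr \<alpha> x * Re (cnj e * W x))"
      by (simp add: F_def algebra_simps)
    then have "hr \<alpha> x * hr \<alpha> x * phi a x + 2 * Re (cnj e * F x) = phi a x * (hr \<alpha> x * hr \<alpha> x + 2 * (hr \<alpha> x * Re (cnj e * W x)))"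
      by (simp add: algebra_simps)
    also have "\<dots> \<le> phi a x * (cmod (g x))\<^sup>2"
      using ineq phi_pos[of a x] by (intro mult_left_mono) auto
    finally show "hr \<alpha> x * hr \<alpha> x * phi a x + 2 * Re (cnj e * F x) \<le> (cmod (g x))\<^sup>2 * phi a x"
      by (simp add: mult_ac)
  qed
  finally show "(\<integral>x. hr \<alpha> x * hr \<alpha> x * phi a x \<partial>lborel) \<le> (\<integral>x. (cmod (g x))\<^sup>2 * phi a x \<partial>lborel)" .
qed

definition eph :: "real \<Rightarrow> ('n::finite \<Rightarrow> nat) \<Rightarrow> complex" where
  "eph t \<alpha> = exp (- \<i> * complex_of_real (t * hermite_eig \<alpha>))"

lemma cmod_eph: "cmod (eph t \<alpha>) = 1"
  by (simp add: eph_def norm_exp_eq_Re)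

lemma herm_prop_prop:
  fixes \<alpha> :: "'n::finite \<Rightarrow> nat"
  shows "sq_integrable (herm_prop t (hermite_nd \<alpha>)) \<and>
    (\<forall>\<gamma>. L2_inner (hermite_nd \<gamma>) (herm_prop t (hermite_nd \<alpha>)) = eph t \<alpha> * L2_inner (hermite_nd \<gamma>) (hermite_nd \<alpha>))"
proof -
  define P where "P g \<longleftrightarrow> sq_integrable g \<and>
     (\<forall>\<gamma>. L2_inner (hermite_nd \<gamma>) g = exp (- \<i> * complex_of_real (t * hermite_eig \<gamma>)) * L2_inner (hermite_nd \<gamma>) (hermite_nd \<alpha>))"
    for g :: "real^'n \<Rightarrow> complex"
  define g0 where "g0 x = eph t \<alpha> * hermite_nd \<alpha> x" for x
  have "P g0"
    unfolding P_def
  proof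
    show "sq_integrable g0"
      using sq_integrable_hermite_nd[of \<alpha>] unfolding sq_integrable_def g0_def
      by (simp add: norm_mult cmod_eph)
    show "\<forall>\<gamma>. L2_inner (hermite_nd \<gamma>) g0 = exp (- \<i> * complex_of_real (t * hermite_eig \<gamma>)) * L2_inner (hermite_nd \<gamma>) (hermite_nd \<alpha>)"
    proof
      fix \<gamma>
      have "L2_inner (hermite_nd \<gamma>) g0 = eph t \<alpha> * L2_inner (hermite_nd \<gamma>) (hermite_nd \<alpha>)"
        unfolding L2_inner_def g0_def by (simp add: mult.left_commute)
      then show "L2_inner (hermite_nd \<gamma>) g0 = exp (- \<i> * complex_of_real (t * hermite_eig \<gamma>)) * L2_inner (hermite_nd \<gamma>) (hermite_nd \<alpha>)"
        by (cases "\<gamma> = \<alpha>") (simp_all add: L2_inner_hermite eph_def)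
    qed
  qed
  then have "P (SOME g. P g)" by (rule someI[of P])
  moreover have "(SOME g. P g) = herm_prop t (hermite_nd \<alpha>)"
    unfolding herm_prop_def P_def by simp
  ultimately have "P (herm_prop t (hermite_nd \<alpha>))" by simp
  then show ?thesis
    unfolding P_def
    by (auto simp: L2_inner_hermite eph_def)
qed

lemma hr_phi_lower:
  fixes \<alpha> :: "'n::finite \<Rightarrow> nat"
  assumes m: "\<And>i. \<alpha> i \<le> m" and a: "a = 1 / (4 * real CARD('n) * (real m + 1))"
  shows "(\<integral>x. hr \<alpha> x * hr \<alpha> x * phi a x \<partial>lborel) \<ge> 3/4"
proof -
  define n where "n = real CARD('n)"
  have n: "n \<ge> 1" unfolding n_def by simp
  have a0: "a \<ge> 0" using a by simp
  have am: "a * (real m + 1) = 1 / (4 * n)" using a unfolding n_def by simp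
  have "(\<Prod>i\<in>(UNIV::'n set). 1 - 1 / (4 * n)) \<le> (\<Prod>i\<in>UNIV. \<integral>s. hermite_fun (\<alpha> i) s * hermite_fun (\<alpha> i) s * exp (- a * s\<^sup>2) \<partial>lborel)"
  proof (rule prod_mono, intro conjI)
    fix i :: 'n
    show "0 \<le> 1 - 1 / (4 * n)" using n by (simp add: field_simps)
    have "1 - 1 / (4 * n) = 1 - a * (real m + 1)" using am by simp
    also have "\<dots> \<le> 1 - a * (real (\<alpha> i) + 1/2)"
      using m[of i] a0 by (intro diff_left_mono mult_left_mono) auto
    also have "\<dots> \<le> (\<integral>s. hermite_fun (\<alpha> i) s * hermite_fun (\<alpha> i) s * exp (- a * s\<^sup>2) \<partial>lborel)"
      by (rule hf_gauss_lower[OF a0])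
    finally show "1 - 1 / (4 * n) \<le> (\<integral>s. hermite_fun (\<alpha> i) s * hermite_fun (\<alpha> i) s * exp (- a * s\<^sup>2) \<partial>lborel)" .
  qed
  also have "\<dots> = (\<integral>x. hr \<alpha> x * hr \<alpha> x * phi a x \<partial>lborel)"
    using a0 by (intro hr_hr_gauss(2)[symmetric]) simp
  finally have le: "(1 - 1 / (4 * n)) ^ CARD('n) \<le> (\<integral>x. hr \<alpha> x * hr \<alpha> x * phi a x \<partial>lborel)"
    by simp
  have "1 + real CARD('n) * (- 1 / (4 * n)) \<le> (1 + (- 1 / (4 * n))) ^ CARD('n)"
    using n by (intro Bernoulli_inequality) (simp add: field_simps)
  moreover have "1 + real CARD('n) * (- 1 / (4 * n)) = 3/4" using n unfolding n_def by simp
  ultimately show ?thesis using le by simp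
qed

lemma prop_lower:
  fixes \<alpha> :: "'n::finite \<Rightarrow> nat"
  assumes m: "\<And>i. \<alpha> i \<le> m" and a: "a = 1 / (4 * real CARD('n) * (real m + 1))"
  shows "integrable lborel (\<lambda>x. (cmod (herm_prop t (hermite_nd \<alpha>) x))\<^sup>2 * phi a x)"
    and "(\<integral>x. (cmod (herm_prop t (hermite_nd \<alpha>) x))\<^sup>2 * phi a x \<partial>lborel) \<ge> 3/4"
proof -
  have a0: "0 \<le> a" "a < 1/2"
  proof -
    show "0 \<le> a" using a by simp
    have c1: "1 \<le> real CARD('n)" using zero_less_card_finite[where 'a='n] by linarith
    have "4 * 1 * 1 \<le> 4 * real CARD('n) * (real m + 1)"
      by (intro mult_mono c1) auto
    then have D: "4 * real CARD('n) * (real m + 1) \<ge> 4" by simp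
    have "a = 1 / (4 * real CARD('n) * (real m + 1))" by (rule a)
    also have "\<dots> \<le> 1 / 4" using D by (intro divide_left_mono) auto
    finally show "a < 1/2" by simp
  qed
  note hp = herm_prop_prop[of t \<alpha>]
  show "integrable lborel (\<lambda>x. (cmod (herm_prop t (hermite_nd \<alpha>) x))\<^sup>2 * phi a x)"
    using herm_lower(1)[of "herm_prop t (hermite_nd \<alpha>)" "eph t \<alpha>" \<alpha> a] hp cmod_eph a0 by blast
  have "(\<integral>x. hr \<alpha> x * hr \<alpha> x * phi a x \<partial>lborel) \<le> (\<integral>x. (cmod (herm_prop t (hermite_nd \<alpha>) x))\<^sup>2 * phi a x \<partial>lborel)"
    using herm_lower(2)[of "herm_prop t (hermite_nd \<alpha>)" "eph t \<alpha>" \<alpha> a] hp cmod_eph a0 by blast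
  then show "(\<integral>x. (cmod (herm_prop t (hermite_nd \<alpha>) x))\<^sup>2 * phi a x \<partial>lborel) \<ge> 3/4"
    using hr_phi_lower[of \<alpha> m a, OF m a] by linarith
qed

lemma phi_exp: "phi a x = exp (\<Sum>i\<in>UNIV. - a * (x $ i)\<^sup>2)"
  unfolding phi_def by (simp add: exp_sum)

lemma phi_powr: "phi a x powr s = phi (a * s) x"
proof -
  have "phi a x powr s = exp (s * (\<Sum>i\<in>UNIV. - a * (x $ i)\<^sup>2))"
    unfolding phi_exp powr_def by simp
  also have "\<dots> = phi (a * s) x"
    unfolding phi_exp by (simp add: sum_distrib_left mult_ac)
  finally show ?thesis .
qed

lemma phi_int:
  assumes c: "c > 0"
  shows "integrable lborel (phi c :: real^'n::finite \<Rightarrow> real)"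
    and "(\<integral>x. phi c x \<partial>(lborel :: (real^'n) measure)) = (sqrt pi / sqrt c) ^ CARD('n)"
proof -
  have i: "integrable lborel (\<lambda>s. exp (- c * s\<^sup>2))" for i :: 'n
    using int_poly_gauss[OF c, of 1] by simp
  have e: "phi c = (\<lambda>x::real^'n. \<Prod>i\<in>UNIV. (\<lambda>s. exp (- c * s\<^sup>2)) (x $ i))"
    by (rule ext) (simp add: phi_def)
  show "integrable lborel (phi c :: real^'n::finite \<Rightarrow> real)"
    unfolding e by (rule lborel_vec_prod(1)[OF i])
  show "(\<integral>x. phi c x \<partial>(lborel :: (real^'n) measure)) = (sqrt pi / sqrt c) ^ CARD('n)"
    unfolding e lborel_vec_prod(2)[OF i] using gauss_integral[OF c] by simp
qed

lemma ennreal_lin: "0 \<le> X \<Longrightarrow> 0 \<le> Y \<Longrightarrow> 0 \<le> Z \<Longrightarrow> ennreal (X * Y + Z) = ennreal X * ennreal Y + ennreal Z"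
  by (simp add: ennreal_plus ennreal_mult)

lemma young_bound:
  fixes \<rho> \<psi> :: "real^'n::finite \<Rightarrow> real"
  assumes [measurable]: "\<rho> \<in> borel_measurable borel" "\<psi> \<in> borel_measurable borel"
    and nn: "\<And>x. \<rho> x \<ge> 0" "\<And>x. \<psi> x \<ge> 0"
    and q: "q > 1" and q': "q' = q / (q - 1)"
    and A0: "A0 > 0" "A0 \<le> (\<integral>x. \<rho> x * \<psi> x \<partial>lborel)" and iA: "integrable lborel (\<lambda>x. \<rho> x * \<psi> x)"
    and iP: "integrable lborel (\<lambda>x. \<psi> x powr q')" and Phi: "\<Phi> = (\<integral>x. \<psi> x powr q' \<partial>lborel)" "\<Phi> > 0"
    and lam: "lam = (2 * \<Phi> / (q' * A0)) powr (1 / q')"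
  shows "ennreal (q * A0 / (2 * lam powr q)) \<le> (\<integral>\<^sup>+ x. ennreal (\<rho> x powr q) \<partial>lborel)"
proof -
  have q'1: "q' > 1" using q unfolding q' by (simp add: field_simps)
  have qq: "1 / q + 1 / q' = 1" using q unfolding q' by (simp add: field_simps)
  have lam0: "lam > 0" using lam Phi A0 q'1 by simp
  have lamq': "lam powr q' = 2 * \<Phi> / (q' * A0)"
    using lam Phi A0 q'1 by (simp add: powr_powr)
  have young: "\<rho> x * \<psi> x \<le> lam powr q / q * \<rho> x powr q + \<psi> x powr q' / (lam powr q' * q')" for x
  proof -
    have "\<rho> x * \<psi> x = (lam * \<rho> x) * (\<psi> x / lam)" using lam0 by simp
    also have "\<dots> \<le> (lam * \<rho> x) powr q / q + (\<psi> x / lam) powr q' / q'"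
      using nn[of x] lam0 by (intro Youngs_inequality q q'1 qq) auto
    also have "\<dots> = lam powr q / q * \<rho> x powr q + \<psi> x powr q' / (lam powr q' * q')"
      using nn[of x] lam0 by (simp add: powr_mult powr_divide)
    finally show ?thesis .
  qed
  define I where "I = (\<integral>\<^sup>+ x. ennreal (\<rho> x powr q) \<partial>lborel)"
  have "ennreal A0 \<le> ennreal (\<integral>x. \<rho> x * \<psi> x \<partial>lborel)" using A0 by simp
  also have "\<dots> = (\<integral>\<^sup>+ x. ennreal (\<rho> x * \<psi> x) \<partial>lborel)"
    using iA nn by (intro nn_integral_eq_integral[symmetric]) auto
  also have "\<dots> \<le> (\<integral>\<^sup>+ x. ennreal (lam powr q / q) * ennreal (\<rho> x powr q) + ennreal (\<psi> x powr q' / (lam powr q' * q')) \<partial>lborel)"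
  proof (rule nn_integral_mono)
    fix x
    have "ennreal (\<rho> x * \<psi> x) \<le> ennreal (lam powr q / q * \<rho> x powr q + \<psi> x powr q' / (lam powr q' * q'))"
      using young[of x] by (rule ennreal_leI)
    also have "\<dots> = ennreal (lam powr q / q) * ennreal (\<rho> x powr q) + ennreal (\<psi> x powr q' / (lam powr q' * q'))"
      using q lam0 q'1 nn[of x] by (intro ennreal_lin) auto
    finally show "ennreal (\<rho> x * \<psi> x) \<le> ennreal (lam powr q / q) * ennreal (\<rho> x powr q) + ennreal (\<psi> x powr q' / (lam powr q' * q'))" .
  qed
  also have "\<dots> = ennreal (lam powr q / q) * I + (\<integral>\<^sup>+ x. ennreal (\<psi> x powr q' / (lam powr q' * q')) \<partial>lborel)"
    unfolding I_def by (subst nn_integral_add) (auto simp: nn_integral_cmult)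
  also have "(\<integral>\<^sup>+ x. ennreal (\<psi> x powr q' / (lam powr q' * q')) \<partial>lborel) = ennreal (\<Phi> / (lam powr q' * q'))"
  proof -
    have "(\<integral>\<^sup>+ x. ennreal (\<psi> x powr q' / (lam powr q' * q')) \<partial>lborel) = ennreal (\<integral>x. \<psi> x powr q' / (lam powr q' * q') \<partial>lborel)"
      using iP q'1 lam0 by (intro nn_integral_eq_integral AE_I2) auto
    then show ?thesis using Phi by simp
  qed
  also have "\<Phi> / (lam powr q' * q') = A0 / 2"
    unfolding lamq' using Phi A0 q'1 by (simp add: field_simps)
  finally have main: "ennreal A0 \<le> ennreal (lam powr q / q) * I + ennreal (A0 / 2)" .
  show ?thesis
  proof (cases "I = \<infinity>")
    case True then show ?thesis unfolding I_def[symmetric] by simp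
  next
    case False
    then obtain Ir where Ir: "I = ennreal Ir" "Ir \<ge> 0" by (cases I) auto
    have "ennreal A0 \<le> ennreal (lam powr q / q * Ir + A0 / 2)"
      using main Ir q A0 lam0 by (subst ennreal_lin) auto
    then have "A0 \<le> lam powr q / q * Ir + A0 / 2"
      using Ir q A0 lam0 by (subst (asm) ennreal_le_iff) auto
    then have "q * A0 / (2 * lam powr q) \<le> Ir"
      using q lam0 by (simp add: field_simps)
    then show ?thesis unfolding I_def[symmetric] Ir by (rule ennreal_leI)
  qed
qed

lemma enn_powr_lower:
  assumes "ennreal b \<le> I" "0 \<le> b" "0 \<le> s"
  shows "ennreal (b powr s) \<le> enn_powr I s"
proof (cases "I = \<infinity>")
  case True then show ?thesis by (simp add: enn_powr_def)
next
  case False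
  then obtain i where i: "I = ennreal i" "0 \<le> i" by (cases I) auto
  then have "b \<le> i" using assms by (simp add: ennreal_le_iff)
  then have "b powr s \<le> i powr s" using assms by (intro powr_mono2) auto
  then show ?thesis using i by (simp add: enn_powr_def ennreal_leI)
qed

definition qc :: "real \<Rightarrow> real" where "qc q = q / (q - 1)"

definition aa :: "nat \<Rightarrow> nat \<Rightarrow> real" where "aa nn m = 1 / (4 * real nn * (real m + 1))"

definition PhiC :: "nat \<Rightarrow> real \<Rightarrow> nat \<Rightarrow> real" where
  "PhiC nn q m = (sqrt pi / sqrt (aa nn m * qc q)) ^ nn"

definition A0C :: "nat \<Rightarrow> nat \<Rightarrow> real" where "A0C nn m = 3/4 * (real m + 1) ^ nn"

definition lamC :: "nat \<Rightarrow> real \<Rightarrow> nat \<Rightarrow> real" where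
  "lamC nn q m = (2 * PhiC nn q m / (qc q * A0C nn m)) powr (1 / qc q)"

definition BC :: "nat \<Rightarrow> real \<Rightarrow> nat \<Rightarrow> real" where
  "BC nn q m = q * A0C nn m / (2 * lamC nn q m powr q)"

definition LowC :: "nat \<Rightarrow> real \<Rightarrow> real \<Rightarrow> nat \<Rightarrow> real" where
  "LowC nn p q m = (2 * pi * BC nn q m powr (p / q)) powr (1 / p)"

lemma inner_bound:
  fixes S :: "nat set" and E :: "nat \<Rightarrow> ('n::finite \<Rightarrow> nat)" and t :: real
  assumes S: "finite S" and SJ: "\<And>j i. j \<in> S \<Longrightarrow> E j i \<le> m" and cardS: "card S = (m + 1) ^ CARD('n)"
    and q: "q > 1"
  defines "\<rho> \<equiv> \<lambda>x. \<Sum>j\<in>S. (cmod (herm_prop t (hermite_nd (E j)) x))\<^sup>2"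
  shows "ennreal (BC CARD('n) q m) \<le> (\<integral>\<^sup>+ x. ennreal (\<rho> x powr q) \<partial>lborel)"
proof -
  define nn where "nn = CARD('n)"
  define a where "a = aa nn m"
  have a: "a = 1 / (4 * real CARD('n) * (real m + 1))" unfolding a_def aa_def nn_def by simp
  have a0: "a > 0" unfolding a by simp
  have q'1: "qc q > 1" using q unfolding qc_def by (simp add: field_simps)
  have sq: "sq_integrable (herm_prop t (hermite_nd (E j)))" for j
    using herm_prop_prop by blast
  have gm[measurable]: "herm_prop t (hermite_nd (E j)) \<in> borel_measurable borel" for j
    using sq[of j] by (simp add: sq_integrable_def)
  have \<rho>m[measurable]: "\<rho> \<in> borel_measurable borel" unfolding \<rho>_def by measurable
  have \<rho>0: "\<rho> x \<ge> 0" for x unfolding \<rho>_def by (simp add: sum_nonneg)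
  have ij: "integrable lborel (\<lambda>x. (cmod (herm_prop t (hermite_nd (E j)) x))\<^sup>2 * phi a x)" if "j \<in> S" for j
    by (rule prop_lower(1)[OF SJ[OF that] a])
  have iA: "integrable lborel (\<lambda>x. \<rho> x * phi a x)"
    unfolding \<rho>_def sum_distrib_right using ij by (intro Bochner_Integration.integrable_sum) auto
  have "A0C nn m = (\<Sum>j\<in>S. 3/4)" using cardS unfolding A0C_def nn_def by (simp add: add.commute)
  also have "\<dots> \<le> (\<Sum>j\<in>S. \<integral>x. (cmod (herm_prop t (hermite_nd (E j)) x))\<^sup>2 * phi a x \<partial>lborel)"
    by (intro sum_mono prop_lower(2)[OF SJ a]) auto
  also have "\<dots> = (\<integral>x. \<rho> x * phi a x \<partial>lborel)"
    unfolding \<rho>_def sum_distrib_right using ij by (intro Bochner_Integration.integral_sum[symmetric]) auto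
  finally have A0le: "A0C nn m \<le> (\<integral>x. \<rho> x * phi a x \<partial>lborel)" .
  have A0pos: "A0C nn m > 0" unfolding A0C_def by simp
  have powr_eq: "(\<lambda>x. phi a x powr qc q) = phi (a * qc q)" by (rule ext) (rule phi_powr)
  have aq: "a * qc q > 0" using a0 q'1 by simp
  have iP: "integrable lborel (\<lambda>x::real^'n. phi a x powr qc q)"
    unfolding powr_eq by (rule phi_int(1)[OF aq])
  have Phi: "PhiC nn q m = (\<integral>x. phi a x powr qc q \<partial>(lborel :: (real^'n) measure))"
  proof -
    have "(\<integral>x. phi a x powr qc q \<partial>(lborel :: (real^'n) measure)) = (sqrt pi / sqrt (a * qc q)) ^ CARD('n)"
      unfolding powr_eq by (rule phi_int(2)[OF aq])
    then show ?thesis by (simp add: PhiC_def a_def nn_def)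
  qed
  have Phipos: "PhiC nn q m > 0" unfolding PhiC_def using aq a_def by simp
  have "ennreal (q * A0C nn m / (2 * lamC nn q m powr q)) \<le> (\<integral>\<^sup>+ x. ennreal (\<rho> x powr q) \<partial>lborel)"
    by (rule young_bound[OF \<rho>m phi_meas \<rho>0 less_imp_le[OF phi_pos] q qc_def A0pos A0le iA iP Phi Phipos])
       (simp add: lamC_def)
  then show ?thesis unfolding BC_def nn_def .
qed

lemma growth:
  fixes p q r M :: real
  assumes p: "p \<ge> 1" and q: "q > 1" and r: "r > 2 * q / (q + 1)"
  shows "\<exists>m. M * (real m + 1) powr (real CARD('n::finite) / r) < LowC CARD('n) p q m \<and> LowC CARD('n) p q m > 0"
proof -
  define nn where "nn = CARD('n)"
  have nn1: "real nn \<ge> 1" unfolding nn_def using zero_less_card_finite[where 'a='n] by linarith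
  define q' where "q' = qc q"
  have q'1: "q' > 1" using q unfolding q'_def qc_def by (simp add: field_simps)
  have q'inv: "1 / q' = (q - 1) / q" using q unfolding q'_def qc_def by (simp add: field_simps)
  have r0: "r > 0" using r q by (smt (verit) divide_pos_pos)
  define \<kappa> where "\<kappa> = real nn / q + real nn / (2 * q')"
  have \<kappa>: "\<kappa> = real nn * (q + 1) / (2 * q)"
  proof -
    have "real nn / (2 * q') = real nn * (1 / q') / 2" by simp
    also have "\<dots> = real nn * ((q - 1) / q) / 2" by (simp only: q'inv)
    finally have e: "real nn / (2 * q') = real nn * ((q - 1) / q) / 2" .
    show ?thesis unfolding \<kappa>_def e using q by (simp add: field_simps)
  qed
  have rr: "1 / r < (q + 1) / (2 * q)"
  proof -
    have "2 * q / (q + 1) > 0" using q by simp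
    then have "1 / r < 1 / (2 * q / (q + 1))" using r r0 q by (intro divide_strict_left_mono) auto
    then show ?thesis by simp
  qed
  have \<kappa>r: "\<kappa> - real nn / r > 0"
  proof -
    have "real nn * (1 / r) < real nn * ((q + 1) / (2 * q))" using rr nn1 by (intro mult_strict_left_mono) auto
    then show ?thesis unfolding \<kappa> by simp
  qed
  define K where "K = ln (2 * pi) / p + (ln q + ln (3/4) - ln 2
        - q * (1 / q') * (ln 2 + real nn * (ln pi / 2 - (- (ln 4 + ln (real nn)) + ln q') / 2) - ln q' - ln (3/4))) / q"
  have lnLow: "ln (LowC nn p q m) = K + \<kappa> * ln (real m + 1)" and Lowpos: "LowC nn p q m > 0" for m
  proof -
    define X where "X = real m + 1"
    have X: "X \<ge> 1" unfolding X_def by simp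
    define a where "a = aa nn m"
    have a: "a = 1 / (4 * real nn * X)" unfolding a_def aa_def X_def by simp
    have apos: "a > 0" using a X nn1 by simp
    have La: "ln a = - (ln 4 + ln (real nn) + ln X)"
      using a X nn1 by (simp add: ln_div ln_mult)
    define Phi where "Phi = PhiC nn q m"
    have Phi: "Phi = (sqrt pi / sqrt (a * q')) ^ nn" unfolding Phi_def PhiC_def a_def q'_def by simp
    have Phipos: "Phi > 0" unfolding Phi using apos q'1 by simp
    have LPhi: "ln Phi = real nn * (ln pi / 2 - (ln a + ln q') / 2)"
      unfolding Phi using apos q'1 by (simp add: ln_realpow ln_div ln_sqrt ln_mult)
    define A0 where "A0 = A0C nn m"
    have A0: "A0 = 3/4 * X ^ nn" unfolding A0_def A0C_def X_def by simp
    have A0pos: "A0 > 0" unfolding A0 using X by simp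
    have LA0: "ln A0 = ln (3/4) + real nn * ln X"
      unfolding A0 using X by (subst ln_mult) (auto simp: ln_realpow)
    define lam where "lam = lamC nn q m"
    have lam: "lam = (2 * Phi / (q' * A0)) powr (1 / q')"
      unfolding lam_def lamC_def Phi_def A0_def q'_def by simp
    have lampos: "lam > 0" unfolding lam using Phipos A0pos q'1 by simp
    have Llam: "ln lam = (1 / q') * (ln 2 + ln Phi - ln q' - ln A0)"
      unfolding lam using Phipos A0pos q'1 by (simp add: ln_powr ln_div ln_mult)
    define B where "B = BC nn q m"
    have B: "B = q * A0 / (2 * lam powr q)" unfolding B_def BC_def A0_def lam_def by simp
    have Bpos: "B > 0" unfolding B using q A0pos lampos by simp
    have LB: "ln B = ln q + ln A0 - ln 2 - q * ln lam"
      unfolding B using q A0pos lampos by (simp add: ln_div ln_mult ln_powr)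
    have Low: "LowC nn p q m = (2 * pi * B powr (p / q)) powr (1 / p)" unfolding LowC_def B_def by simp
    show "LowC nn p q m > 0" unfolding Low using Bpos by simp
    have "ln (LowC nn p q m) = (1 / p) * (ln (2 * pi) + (p / q) * ln B)"
      unfolding Low using Bpos p by (simp add: ln_powr ln_mult)
    also have "\<dots> = K + \<kappa> * ln X"
      unfolding LB Llam LPhi La LA0 K_def \<kappa>_def using p q q'1 by (simp add: field_simps)
    finally show "ln (LowC nn p q m) = K + \<kappa> * ln (real m + 1)" unfolding X_def .
  qed
  define M' where "M' = max M 1"
  have M'pos: "M' > 0" unfolding M'_def by simp
  define y0 where "y0 = (ln M' - K) / (\<kappa> - real nn / r)"
  obtain k :: nat where k: "exp y0 < real k" using reals_Archimedean2 by blast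
  define X where "X = real k + 1"
  have X: "X > 0" "exp y0 < X" unfolding X_def using k by auto
  have "y0 < ln X" using X by (metis exp_less_cancel_iff exp_ln)
  then have "(\<kappa> - real nn / r) * y0 < (\<kappa> - real nn / r) * ln X" using \<kappa>r by simp
  then have "ln M' - K < (\<kappa> - real nn / r) * ln X" unfolding y0_def using \<kappa>r by simp
  then have "ln M' + (real nn / r) * ln X < ln (LowC nn p q k)"
    using lnLow[of k] unfolding X_def by (simp add: algebra_simps)
  moreover have "ln (M' * X powr (real nn / r)) = ln M' + (real nn / r) * ln X"
    using M'pos X by (simp add: ln_mult ln_powr)
  ultimately have "ln (M' * X powr (real nn / r)) < ln (LowC nn p q k)" by simp
  then have "M' * X powr (real nn / r) < LowC nn p q k"
    using M'pos X Lowpos[of k] by (subst (asm) ln_less_cancel_iff) auto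
  moreover have "M * X powr (real nn / r) \<le> M' * X powr (real nn / r)"
    unfolding M'_def by (intro mult_right_mono) auto
  ultimately have "M * X powr (real nn / r) < LowC nn p q k" by simp
  then show ?thesis using Lowpos[of k] unfolding X_def nn_def by blast
qed

lemma infinite_fun_nat: "infinite (UNIV :: ('n::finite \<Rightarrow> nat) set)"
proof
  assume "finite (UNIV :: ('n \<Rightarrow> nat) set)"
  then have "finite (range (\<lambda>k::nat. (\<lambda>_::'n. k)))" by (rule finite_subset[rotated]) auto
  moreover have "inj (\<lambda>k::nat. (\<lambda>_::'n. k))" by (auto intro!: injI simp: fun_eq_iff)
  ultimately show False using finite_imageD by blast
qed

lemma construct:
  fixes p q r :: real and m :: nat
  assumes p: "p \<ge> 1" and q: "q > 1" and r: "r > 0"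
  shows "\<exists>(u :: nat \<Rightarrow> real^'n::finite \<Rightarrow> complex) (c :: nat \<Rightarrow> real).
      L2_orthonormal u \<and> summable (\<lambda>j. \<bar>c j\<bar> powr r) \<and> (\<exists>j. c j \<noteq> 0) \<and>
      (\<forall>t x. summable (\<lambda>j. c j * (cmod (herm_prop t (u j) x))^2)) \<and>
      schatten_norm r c = (real m + 1) powr (real CARD('n) / r) \<and>
      ennreal (LowC CARD('n) p q m) \<le> mixed_norm p q (density_t c u)"
proof -
  define E where "E = from_nat_into (UNIV :: ('n \<Rightarrow> nat) set)"
  have bij: "bij_betw E UNIV UNIV"
    unfolding E_def by (rule bij_betw_from_nat_into) (auto simp: infinite_fun_nat)
  then have injE: "inj E" and surjE: "surj E" by (auto simp: bij_betw_def)
  define J where "J = {\<alpha> :: 'n \<Rightarrow> nat. \<forall>i. \<alpha> i \<le> m}"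
  have J: "J = PiE UNIV (\<lambda>_. {..m})" unfolding J_def PiE_UNIV_domain by (auto simp: Pi_def)
  have finJ: "finite J" unfolding J by (intro finite_PiE) auto
  have cardJ: "card J = (m + 1) ^ CARD('n)" unfolding J by (simp add: card_PiE)
  define S where "S = E -` J"
  have finS: "finite S" unfolding S_def using finJ injE by (intro finite_vimageI) auto
  have cardS: "card S = (m + 1) ^ CARD('n)" unfolding S_def using injE surjE cardJ
    by (subst card_vimage_inj) auto
  have SJ: "\<And>j i. j \<in> S \<Longrightarrow> E j i \<le> m" unfolding S_def J_def by auto
  define u where "u j = hermite_nd (E j)" for j
  define c where "c j = (if j \<in> S then 1 else 0 :: real)" for j
  have orth: "L2_orthonormal u"
    unfolding L2_orthonormal_def u_def
    using injE by (auto simp: sq_integrable_hermite_nd L2_inner_hermite inj_eq)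
  have sum1: "summable (\<lambda>j. \<bar>c j\<bar> powr r)"
    by (rule summable_finite[OF finS]) (simp add: c_def)
  obtain j0 where j0: "E j0 = (\<lambda>_. 0)" using surjE by (metis surjD)
  have "j0 \<in> S" unfolding S_def J_def using j0 by simp
  then have nz: "\<exists>j. c j \<noteq> 0" unfolding c_def by auto
  have sum2: "\<forall>t x. summable (\<lambda>j. c j * (cmod (herm_prop t (u j) x))^2)"
    by (intro allI summable_finite[OF finS]) (simp add: c_def)
  have "(\<Sum>j. \<bar>c j\<bar> powr r) = (\<Sum>j\<in>S. \<bar>c j\<bar> powr r)"
    by (rule suminf_finite[OF finS]) (simp add: c_def)
  also have "\<dots> = real (card S)" by (simp add: c_def)
  finally have "schatten_norm r c = (real ((m + 1) ^ CARD('n))) powr (1 / r)"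
    unfolding schatten_norm_def cardS by simp
  also have "\<dots> = (real m + 1) powr (real CARD('n) / r)"
    by (simp add: powr_realpow[symmetric] powr_powr add.commute)
  finally have sch: "schatten_norm r c = (real m + 1) powr (real CARD('n) / r)" .
  have dens: "density_t c u t x = (\<Sum>j\<in>S. (cmod (herm_prop t (hermite_nd (E j)) x))\<^sup>2)" for t x
  proof -
    have "density_t c u t x = (\<Sum>j\<in>S. c j * (cmod (herm_prop t (u j) x))\<^sup>2)"
      unfolding density_t_def by (rule suminf_finite[OF finS]) (simp add: c_def)
    then show ?thesis by (simp add: c_def u_def)
  qed
  have inner: "ennreal (BC CARD('n) q m powr (p / q)) \<le> enn_powr (\<integral>\<^sup>+ x. ennreal (\<bar>density_t c u t x\<bar> powr q) \<partial>lborel) (p / q)" for t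
  proof -
    have e: "(\<lambda>x. ennreal (\<bar>density_t c u t x\<bar> powr q)) = (\<lambda>x. ennreal ((\<Sum>j\<in>S. (cmod (herm_prop t (hermite_nd (E j)) x))\<^sup>2) powr q))"
      by (rule ext) (simp add: dens sum_nonneg)
    have B0: "BC CARD('n) q m \<ge> 0" unfolding BC_def A0C_def using q by simp
    have pq: "0 \<le> p / q" using p q by (intro divide_nonneg_nonneg) auto
    show ?thesis unfolding e
      by (rule enn_powr_lower[OF inner_bound[OF finS SJ cardS q] B0 pq])
  qed
  have "ennreal (BC CARD('n) q m powr (p / q) * (2 * pi))
      = (\<integral>\<^sup>+ t. ennreal (BC CARD('n) q m powr (p / q)) * indicator {-pi..pi} t \<partial>lborel)"
    by (subst nn_integral_cmult_indicator) (auto simp: ennreal_mult)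
  also have "\<dots> \<le> (\<integral>\<^sup>+ t. indicator {-pi..pi} t * enn_powr (\<integral>\<^sup>+ x. ennreal (\<bar>density_t c u t x\<bar> powr q) \<partial>lborel) (p / q) \<partial>lborel)"
    by (intro nn_integral_mono) (auto split: split_indicator intro: inner)
  finally have outer: "ennreal (BC CARD('n) q m powr (p / q) * (2 * pi)) \<le> (\<integral>\<^sup>+ t. indicator {-pi..pi} t * enn_powr (\<integral>\<^sup>+ x. ennreal (\<bar>density_t c u t x\<bar> powr q) \<partial>lborel) (p / q) \<partial>lborel)" .
  have low: "ennreal (LowC CARD('n) p q m) \<le> mixed_norm p q (density_t c u)"
    unfolding mixed_norm_def LowC_def
    using enn_powr_lower[OF outer] p by (simp add: mult.commute)
  show ?thesis using orth sum1 nz sum2 sch low by blast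
qed

theorem proposition5p1:
  fixes p q r :: real
  assumes "p \<ge> 1" and "q \<ge> 1"
    and "2 / p + real CARD('n::finite) / q = real CARD('n)"
    and "r > 2 * q / (q + 1)"
  shows "\<forall>M::real. \<exists>(u :: nat \<Rightarrow> real^'n \<Rightarrow> complex) (c :: nat \<Rightarrow> real).
           L2_orthonormal u \<and> summable (\<lambda>j. \<bar>c j\<bar> powr r) \<and> (\<exists>j. c j \<noteq> 0) \<and>
           (\<forall>t x. summable (\<lambda>j. c j * (cmod (herm_prop t (u j) x))^2)) \<and>
           ennreal (M * schatten_norm r c) < mixed_norm p q (density_t c u)"
proof
  fix M :: real
  have q1: "q > 1"
  proof (rule ccontr)
    assume "\<not> q > 1"
    then have "q = 1" using assms(2) by simp
    then have "2 / p = 0" using assms(3) by simp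
    then show False using assms(1) by simp
  qed
  have r0: "r > 0" using assms(4) q1 by (smt (verit) divide_pos_pos)
  obtain m where m: "M * (real m + 1) powr (real CARD('n) / r) < LowC CARD('n) p q m"
    and Lpos: "LowC CARD('n) p q m > 0"
    using growth[OF assms(1) q1 assms(4), of M] by blast
  obtain u :: "nat \<Rightarrow> real^'n \<Rightarrow> complex" and c :: "nat \<Rightarrow> real" where
    props: "L2_orthonormal u" "summable (\<lambda>j. \<bar>c j\<bar> powr r)" "\<exists>j. c j \<noteq> 0"
      "\<forall>t x. summable (\<lambda>j. c j * (cmod (herm_prop t (u j) x))^2)"
      and sch: "schatten_norm r c = (real m + 1) powr (real CARD('n) / r)"
      and low: "ennreal (LowC CARD('n) p q m) \<le> mixed_norm p q (density_t c u)"
    using construct[OF assms(1) q1 r0, of m] by blast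
  have "ennreal (M * schatten_norm r c) < ennreal (LowC CARD('n) p q m)"
    unfolding sch by (rule ennreal_lessI[OF Lpos m])
  also note low
  finally show "\<exists>(u :: nat \<Rightarrow> real^'n \<Rightarrow> complex) (c :: nat \<Rightarrow> real).
           L2_orthonormal u \<and> summable (\<lambda>j. \<bar>c j\<bar> powr r) \<and> (\<exists>j. c j \<noteq> 0) \<and>
           (\<forall>t x. summable (\<lambda>j. c j * (cmod (herm_prop t (u j) x))^2)) \<and>
           ennreal (M * schatten_norm r c) < mixed_norm p q (density_t c u)"
    using props by blast
qed

end
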